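(* Let $n\ge 1$ be a fixed integer. For an integer $H\ge 1$ let $\mathcal{M}_n(\mathbb{Z};H)$ be the set of $n\times n$ matrices $A=(a_{ij})_{i,j=1}^n$ with integer entries satisfying $|a_{ij}|\le H$ for all $i,j$, and define \[ \Phi_n(H)=\sum_{\substack{A\in\mathcal{M}_n(\mathbb{Z};H)\\ \det A\ne 0}}\frac{\varphi(|\det A|)}{|\det A|}, \] where $\varphi$ is the Euler totient function. Then \[ \Phi_n(H)=2^{n^2}\sigma_n H^{n^2}+O\left(H^{n^2-\vartheta_n+o(1)}\right) \] as $H\to\infty$, where \[ \sigma_n=\prod_{p\ \text{prime}}\left(1-\frac1p\right)\left(1+\frac1p\prod_{j=2}^{n}\left(1-p^{-j}\right)\right),\qquad \vartheta_n=1-\frac{1}{n^3+1}. \]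
   Context: Implied constants depend only on $n$. The notation $O(H^{a+o(1)})$ means: for every fixed $\varepsilon>0$ the quantity is $O(H^{a+\varepsilon})$ for all sufficiently large $H$ (with the implied constant allowed to depend on $n$ and $\varepsilon$). *)

theory Defs
  imports "HOL-Analysis.Analysis" "HOL-Number_Theory.Totient"
begin

definition int_matrices_bounded :: "int \<Rightarrow> (int ^ ('n::finite) ^ 'n) set" where
  "int_matrices_bounded H = {A. \<forall>i j. \<bar>A $ i $ j\<bar> \<le> H}"

definition Phi :: "('n::finite) itself \<Rightarrow> int \<Rightarrow> real" where
  "Phi _ H = (\<Sum>A \<in> {A :: int ^ 'n ^ 'n. A \<in> int_matrices_bounded H \<and> det A \<noteq> 0}.
       real (totient (nat \<bar>det A\<bar>)) / real_of_int \<bar>det A\<bar>)"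

definition sigma_factor :: "nat \<Rightarrow> nat \<Rightarrow> real" where
  "sigma_factor n p = (1 - 1 / real p) *
     (1 + (1 / real p) * (\<Prod>j\<in>{2..n}. (1 - 1 / real p ^ j)))"

definition sigma_const :: "nat \<Rightarrow> real" where
  "sigma_const n = lim (\<lambda>N. \<Prod>p\<in>{p. prime p \<and> p \<le> N}. sigma_factor n p)"

definition vartheta :: "nat \<Rightarrow> real" where
  "vartheta n = 1 - 1 / (real n ^ 3 + 1)"

end

theory Submission imports Defs "HOL-Number_Theory.Cong" begin

lemma bij_vec_set:
  "bij_betw vec_nth {v::'a^'n::finite. \<forall>j. v$j \<in> S j} (Pi\<^sub>E UNIV S)"
  unfolding bij_betw_def
proof
  show "inj_on vec_nth {v::'a^'n::finite. \<forall>j. v$j \<in> S j}"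
    by (auto simp: inj_on_def vec_eq_iff)
  show "vec_nth ` {v::'a^'n::finite. \<forall>j. v$j \<in> S j} = Pi\<^sub>E UNIV S"
  proof
    show "vec_nth ` {v::'a^'n::finite. \<forall>j. v$j \<in> S j} \<subseteq> Pi\<^sub>E UNIV S" by auto
    show "Pi\<^sub>E UNIV S \<subseteq> vec_nth ` {v::'a^'n::finite. \<forall>j. v$j \<in> S j}"
    proof
      fix f assume "f \<in> Pi\<^sub>E UNIV S"
      then have "f = vec_nth (vec_lambda f)" "vec_lambda f \<in> {v::'a^'n::finite. \<forall>j. v$j \<in> S j}"
        by auto
      then show "f \<in> vec_nth ` {v::'a^'n::finite. \<forall>j. v$j \<in> S j}" by blast
    qed
  qed
qed

lemma card_vec_set:
  assumes "\<And>j. finite (S j)"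
  shows "card {v::'a^'n::finite. \<forall>j. v$j \<in> S j} = (\<Prod>j\<in>UNIV. card (S j))"
  using bij_betw_same_card[OF bij_vec_set[of S]] card_PiE[of UNIV S] by simp

lemma finite_vec_set:
  assumes "\<And>j. finite (S j)"
  shows "finite {v::'a^'n::finite. \<forall>j. v$j \<in> S j}"
  using bij_betw_finite[OF bij_vec_set[of S]] finite_PiE[of UNIV S] assms by simp

lemma mat_set_eq: "{A::'a^'n::finite^'m::finite. \<forall>i j. A$i$j \<in> S i j} =
   {A. \<forall>i. A$i \<in> {v. \<forall>j. v$j \<in> S i j}}" by auto

lemma card_mat_set:
  assumes "\<And>i j. finite (S i j)"
  shows "card {A::'a^'n::finite^'m::finite. \<forall>i j. A$i$j \<in> S i j} = (\<Prod>i\<in>UNIV. \<Prod>j\<in>UNIV. card (S i j))"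
  unfolding mat_set_eq
  by (subst card_vec_set) (auto simp: assms finite_vec_set card_vec_set)

lemma finite_mat_set:
  assumes "\<And>i j. finite (S i j)"
  shows "finite {A::'a^'n::finite^'m::finite. \<forall>i j. A$i$j \<in> S i j}"
  unfolding mat_set_eq by (rule finite_vec_set) (auto simp: assms finite_vec_set)


lemma det_cong:
  fixes A B :: "int^'n::finite^'n"
  assumes "\<And>i j. [A$i$j = B$i$j] (mod q)"
  shows "[det A = det B] (mod q)"
  unfolding det_def by (intro cong_sum cong_mult cong_refl cong_prod assms)

lemma det_abs_bound:
  fixes A :: "int^'n::finite^'n"
  assumes "\<And>i j. \<bar>A$i$j\<bar> \<le> H"
  shows "\<bar>det A\<bar> \<le> fact CARD('n) * H ^ CARD('n)"
proof -
  have "\<bar>det A\<bar> \<le> (\<Sum>p\<in>{p. p permutes (UNIV::'n set)}. \<bar>of_int (sign p) * (\<Prod>i\<in>UNIV. A$i$p i)\<bar>)"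
    unfolding det_def by (rule sum_abs)
  also have "\<dots> \<le> (\<Sum>p\<in>{p. p permutes (UNIV::'n set)}. H ^ CARD('n))"
  proof (rule sum_mono)
    fix p assume "p \<in> {p. p permutes (UNIV::'n set)}"
    have "\<bar>of_int (sign p) * (\<Prod>i\<in>UNIV. A$i$p i)\<bar> = (\<Prod>i\<in>UNIV. \<bar>A$i$p i\<bar>)"
      by (simp add: abs_mult sign_def abs_prod)
    also have "\<dots> \<le> (\<Prod>i\<in>(UNIV::'n set). H)"
      by (rule prod_mono) (auto simp: assms)
    finally show "\<bar>of_int (sign p) * (\<Prod>i\<in>UNIV. A$i$p i)\<bar> \<le> H ^ CARD('n)" by simp
  qed
  also have "\<dots> = fact CARD('n) * H ^ CARD('n)"
    by (simp add: card_permutations)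
  finally show ?thesis .
qed

definition dsub :: "'n::finite set \<Rightarrow> int^'n^'n \<Rightarrow> int" where
  "dsub I A = det (\<chi> i j. if i \<in> I \<and> j \<in> I then A$i$j else if i = j then 1 else 0)"

lemma dsub_UNIV: "dsub UNIV A = det A"
  unfolding dsub_def by (simp add: vec_eq_iff)

lemma dsub_empty: "dsub {} (A::int^'n::finite^'n) = 1"
proof -
  have "(\<chi> i j. if i \<in> {} \<and> j \<in> {} then A$i$j else if i = j then 1 else 0) = (mat 1 :: int^'n^'n)"
    by (simp add: vec_eq_iff mat_def)
  then show ?thesis unfolding dsub_def by simp
qed

lemma dsub_cong:
  assumes "\<And>i j. i \<in> I \<Longrightarrow> j \<in> I \<Longrightarrow> A$i$j = B$i$j"
  shows "dsub I A = dsub I B"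
proof -
  have "(\<chi> i j. if i \<in> I \<and> j \<in> I then A$i$j else if i = j then 1 else 0) =
        (\<chi> i j. if i \<in> I \<and> j \<in> I then B$i$j else if i = j then 1 else (0::int))"
    using assms by (simp add: vec_eq_iff)
  then show ?thesis unfolding dsub_def by simp
qed

lemma dsub_step:
  fixes A A' :: "int^'n::finite^'n"
  assumes i0: "i0 \<in> I" and eq: "\<And>i j. (i, j) \<noteq> (i0, i0) \<Longrightarrow> A$i$j = A'$i$j"
  shows "dsub I A - dsub I A' = (A$i0$i0 - A'$i0$i0) * dsub (I - {i0}) A"
proof -
  define M where "M = (\<chi> i j. if i \<in> I \<and> j \<in> I then A$i$j else if i = j then 1 else (0::int))"
  define M' where "M' = (\<chi> i j. if i \<in> I \<and> j \<in> I then A'$i$j else if i = j then 1 else (0::int))"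
  define MJ where "MJ = (\<chi> i j. if i \<in> I - {i0} \<and> j \<in> I - {i0} then A$i$j else if i = j then 1 else (0::int))"
  have key: "(\<Prod>i\<in>UNIV. M$i$p i) - (\<Prod>i\<in>UNIV. M'$i$p i) = (A$i0$i0 - A'$i0$i0) * (\<Prod>i\<in>UNIV. MJ$i$p i)"
    if p: "p permutes (UNIV::'n set)" for p
  proof -
    have rest: "(\<Prod>i\<in>UNIV-{i0}. M$i$p i) = (\<Prod>i\<in>UNIV-{i0}. M'$i$p i)"
      by (intro prod.cong refl) (auto simp: M_def M'_def eq)
    have split: "(\<Prod>i\<in>UNIV. f i) = f i0 * (\<Prod>i\<in>UNIV-{i0}. f i)" for f :: "'n \<Rightarrow> int"
      by (simp add: prod.remove)
    show ?thesis
    proof (cases "p i0 = i0")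
      case True
      have ne: "p i \<noteq> i0" if "i \<noteq> i0" for i
        using that True p by (metis permutes_inj injD)
      have rest2: "(\<Prod>i\<in>UNIV-{i0}. MJ$i$p i) = (\<Prod>i\<in>UNIV-{i0}. M$i$p i)"
        by (intro prod.cong refl) (auto simp: M_def MJ_def ne)
      show ?thesis
        apply (subst (1 2 3) split)
        using True i0 rest rest2 by (simp add: M_def M'_def MJ_def algebra_simps)
    next
      case False
      have "M$i0$p i0 = M'$i0$p i0" using False by (auto simp: M_def M'_def eq)
      moreover have "MJ$i0$p i0 = 0" using False by (auto simp: MJ_def)
      ultimately show ?thesis
        apply (subst (1 2 3) split) using rest by simp
    qed
  qed
  have "dsub I A - dsub I A' = det M - det M'" by (simp add: dsub_def M_def M'_def)
  also have "\<dots> = (\<Sum>p\<in>{p. p permutes (UNIV::'n set)}. of_int (sign p) * ((\<Prod>i\<in>UNIV. M$i$p i) - (\<Prod>i\<in>UNIV. M'$i$p i)))"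
    unfolding det_def by (simp add: sum_subtractf algebra_simps)
  also have "\<dots> = (\<Sum>p\<in>{p. p permutes (UNIV::'n set)}. (A$i0$i0 - A'$i0$i0) * (of_int (sign p) * (\<Prod>i\<in>UNIV. MJ$i$p i)))"
    by (intro sum.cong refl) (simp add: key)
  also have "\<dots> = (A$i0$i0 - A'$i0$i0) * det MJ"
    unfolding det_def by (simp add: sum_distrib_left)
  finally show ?thesis by (simp add: dsub_def MJ_def)
qed

lemma box_eq: "int_matrices_bounded H = {A::int^'n::finite^'n. \<forall>i j. A$i$j \<in> {-H..H}}"
  unfolding int_matrices_bounded_def by (intro Collect_cong) (meson abs_le_iff atLeastAtMost_iff minus_le_iff)

lemma prod_UNIV_pairs: "(\<Prod>i\<in>(UNIV::'n::finite set). \<Prod>j\<in>(UNIV::'n set). f i j) = (\<Prod>x\<in>(UNIV::('n\<times>'n) set). f (fst x) (snd x))"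
  by (simp add: prod.cartesian_product split_beta UNIV_Times_UNIV[symmetric] del: UNIV_Times_UNIV)

lemma finite_box: "finite (int_matrices_bounded H :: (int^'n::finite^'n) set)"
  unfolding box_eq by (rule finite_mat_set) auto

lemma card_box:
  assumes "H \<ge> 0"
  shows "card (int_matrices_bounded H :: (int^'n::finite^'n) set) = nat (2*H+1) ^ (CARD('n)*CARD('n))"
proof -
  have "card (int_matrices_bounded H :: (int^'n::finite^'n) set) = (\<Prod>i\<in>(UNIV::'n set). \<Prod>j\<in>(UNIV::'n set). card {-H..H})"
    unfolding box_eq by (rule card_mat_set) auto
  also have "\<dots> = nat (2*H+1) ^ (CARD('n)*CARD('n))"
    using assms by (simp add: power_mult[symmetric])
  finally show ?thesis .
qed

lemma card_box_fix:
  assumes "H \<ge> 0"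
  shows "card {A\<in>int_matrices_bounded H :: (int^'n::finite^'n) set. A$i0$j0 = 0} = nat (2*H+1) ^ (CARD('n)*CARD('n) - 1)"
proof -
  have eq: "{A\<in>int_matrices_bounded H :: (int^'n::finite^'n) set. A$i0$j0 = 0} =
     {A. \<forall>i j. A$i$j \<in> (if (i,j) = (i0,j0) then {0} else {-H..H})}"
    unfolding box_eq
  proof (rule set_eqI)
    fix A :: "int^'n^'n"
    show "A \<in> {A \<in> {A. \<forall>i j. A $ i $ j \<in> {- H..H}}. A $ i0 $ j0 = 0} \<longleftrightarrow>
          A \<in> {A. \<forall>i j. A $ i $ j \<in> (if (i, j) = (i0, j0) then {0} else {- H..H})}"
    proof
      assume "A \<in> {A \<in> {A. \<forall>i j. A $ i $ j \<in> {- H..H}}. A $ i0 $ j0 = 0}"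
      then show "A \<in> {A. \<forall>i j. A $ i $ j \<in> (if (i, j) = (i0, j0) then {0} else {- H..H})}" by auto
    next
      assume "A \<in> {A. \<forall>i j. A $ i $ j \<in> (if (i, j) = (i0, j0) then {0} else {- H..H})}"
      then have a: "\<And>i j. A $ i $ j \<in> (if (i, j) = (i0, j0) then {0} else {- H..H})" by simp
      have "A$i0$j0 = 0" using a[of i0 j0] by simp
      moreover have "A$i$j \<in> {-H..H}" for i j
        using a[of i j] assms by (cases "(i,j) = (i0,j0)") auto
      ultimately show "A \<in> {A \<in> {A. \<forall>i j. A $ i $ j \<in> {- H..H}}. A $ i0 $ j0 = 0}" by simp
    qed
  qed
  have "card {A\<in>int_matrices_bounded H :: (int^'n::finite^'n) set. A$i0$j0 = 0} =
     (\<Prod>i\<in>(UNIV::'n set). \<Prod>j\<in>(UNIV::'n set). card (if (i,j) = (i0,j0) then {0} else {-H..H}))"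
    unfolding eq by (rule card_mat_set) auto
  also have "\<dots> = (\<Prod>x\<in>(UNIV::('n\<times>'n) set). if x = (i0,j0) then 1 else nat (2*H+1))"
    unfolding prod_UNIV_pairs using assms by (intro prod.cong refl) auto
  also have "\<dots> = (\<Prod>x\<in>(UNIV::('n\<times>'n) set) - {(i0,j0)}. nat (2*H+1))"
  proof -
    have "(\<Prod>x\<in>(UNIV::('n\<times>'n) set). if x = (i0,j0) then 1 else nat (2*H+1)) =
      (if (i0,j0) = (i0,j0) then 1 else nat (2*H+1)) * (\<Prod>x\<in>(UNIV::('n\<times>'n) set) - {(i0,j0)}. if x = (i0,j0) then 1 else nat (2*H+1))"
      by (rule prod.remove) auto
    also have "\<dots> = (\<Prod>x\<in>(UNIV::('n\<times>'n) set) - {(i0,j0)}. nat (2*H+1))"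
      by (subst if_P, rule refl, subst mult_1, rule prod.cong, auto)
    finally show ?thesis .
  qed
  also have "\<dots> = nat (2*H+1) ^ (CARD('n)*CARD('n) - 1)"
    by (simp add: card_Diff_singleton)
  finally show ?thesis .
qed

lemma Z_bound_gen:
  fixes H :: int
  assumes H: "H \<ge> 0" and fin: "finite I"
  shows "card {A\<in>int_matrices_bounded H :: (int^'n::finite^'n) set. dsub I A = 0} \<le> card I * nat (2*H+1) ^ (CARD('n)*CARD('n) - 1)"
  using fin
proof (induction I rule: finite_induct)
  case empty
  then show ?case by (simp add: dsub_empty)
next
  case (insert i0 J)
  let ?B = "int_matrices_bounded H :: (int^'n::finite^'n) set"
  let ?I = "insert i0 J"
  define Y where "Y = {A\<in>?B. dsub J A \<noteq> 0 \<and> dsub ?I A = 0}"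
  define \<pi> where "\<pi> = (\<lambda>A::int^'n^'n. (\<chi> i j. if (i,j) = (i0,i0) then 0 else A$i$j) :: int^'n^'n)"
  have sub: "{A\<in>?B. dsub ?I A = 0} \<subseteq> {A\<in>?B. dsub J A = 0} \<union> Y" by (auto simp: Y_def)
  have IJ: "?I - {i0} = J" using insert by auto
  have inj: "inj_on \<pi> Y"
  proof
    fix A A' assume A: "A \<in> Y" and A': "A' \<in> Y" and e: "\<pi> A = \<pi> A'"
    have eq: "A$i$j = A'$i$j" if "(i,j) \<noteq> (i0,i0)" for i j
      using arg_cong[OF e, of "\<lambda>M. M$i$j"] that unfolding \<pi>_def by (auto split: if_splits)
    have "dsub ?I A - dsub ?I A' = (A$i0$i0 - A'$i0$i0) * dsub (?I - {i0}) A"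
      by (rule dsub_step) (auto simp: eq)
    then have "(A$i0$i0 - A'$i0$i0) * dsub J A = 0" using A A' by (simp add: Y_def IJ)
    then have "A$i0$i0 = A'$i0$i0" using A by (simp add: Y_def)
    then show "A = A'"
      unfolding vec_eq_iff
    proof (intro allI)
      fix i j
      show "A$i$j = A'$i$j" using eq[of i j] \<open>A$i0$i0 = A'$i0$i0\<close> by (cases "(i,j) = (i0,i0)") auto
    qed
  qed
  have img: "\<pi> ` Y \<subseteq> {A\<in>?B. A$i0$i0 = 0}"
    unfolding \<pi>_def Y_def box_eq using H by auto
  have "card Y = card (\<pi> ` Y)" using inj by (simp add: card_image)
  also have "\<dots> \<le> card {A\<in>?B. A$i0$i0 = 0}"
    by (rule card_mono[OF _ img]) (simp add: finite_box)
  also have "\<dots> = nat (2*H+1) ^ (CARD('n)*CARD('n) - 1)" using card_box_fix[OF H] .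
  finally have cY: "card Y \<le> nat (2*H+1) ^ (CARD('n)*CARD('n) - 1)" .
  have "card {A\<in>?B. dsub ?I A = 0} \<le> card ({A\<in>?B. dsub J A = 0} \<union> Y)"
    by (rule card_mono[OF _ sub]) (simp add: finite_box Y_def)
  also have "\<dots> \<le> card {A\<in>?B. dsub J A = 0} + card Y" by (rule card_Un_le)
  also have "\<dots> \<le> card J * nat (2*H+1) ^ (CARD('n)*CARD('n) - 1) + nat (2*H+1) ^ (CARD('n)*CARD('n) - 1)"
    using insert.IH cY by linarith
  finally show ?case using insert by simp
qed

lemma Z_bound:
  fixes H :: int
  assumes H: "H \<ge> 0"
  shows "card {A\<in>int_matrices_bounded H :: (int^'n::finite^'n) set. det A = 0} \<le> CARD('n) * nat (2*H+1) ^ (CARD('n)*CARD('n) - 1)"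
  using Z_bound_gen[OF H, of UNIV] by (simp add: dsub_UNIV)


definition Vp :: "nat \<Rightarrow> (int^'m::finite) set" where "Vp p = {v. \<forall>j. v$j \<in> {0..<int p}}"
definition vmod :: "nat \<Rightarrow> int^'m::finite \<Rightarrow> int^'m" where "vmod p v = (\<chi> j. v$j mod int p)"
definition lin :: "('n \<Rightarrow> int) \<Rightarrow> 'n set \<Rightarrow> ('n \<Rightarrow> int^'m::finite) \<Rightarrow> int^'m"
  where "lin c R f = (\<Sum>i\<in>R. c i *s f i)"
definition CS :: "nat \<Rightarrow> 'n set \<Rightarrow> ('n \<Rightarrow> int) set" where "CS p R = Pi\<^sub>E R (\<lambda>_. {0..<int p})"
definition indep :: "nat \<Rightarrow> 'n set \<Rightarrow> ('n \<Rightarrow> int^'m::finite) \<Rightarrow> bool"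
  where "indep p R f \<longleftrightarrow> (\<forall>c \<in> CS p R. vmod p (lin c R f) = 0 \<longrightarrow> (\<forall>i\<in>R. c i = 0))"
definition spn :: "nat \<Rightarrow> 'n set \<Rightarrow> ('n \<Rightarrow> int^'m::finite) \<Rightarrow> (int^'m) set"
  where "spn p R f = (\<lambda>c. vmod p (lin c R f)) ` CS p R"

lemma lin_nth: "lin c R f $ j = (\<Sum>i\<in>R. c i * f i $ j)"
  by (simp add: lin_def sum_component)

lemma vmod_eq_iff: "vmod p u = vmod p w \<longleftrightarrow> (\<forall>j. [u$j = w$j] (mod int p))"
  by (simp add: vmod_def vec_eq_iff cong_def)

lemma vmod_eq_0_iff: "vmod p u = 0 \<longleftrightarrow> (\<forall>j. [u$j = 0] (mod int p))"
  by (simp add: vmod_def vec_eq_iff cong_def)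

lemma vmod_Vp: "v \<in> Vp p \<Longrightarrow> vmod p v = v"
  by (simp add: vmod_def Vp_def vec_eq_iff)

lemma vmod_in_Vp: "p > 0 \<Longrightarrow> vmod p v \<in> Vp p"
  by (simp add: vmod_def Vp_def)

lemma finite_Vp: "finite (Vp p :: (int^'m::finite) set)"
  unfolding Vp_def by (rule finite_vec_set) auto

lemma card_Vp: "card (Vp p :: (int^'m::finite) set) = p ^ CARD('m)"
  unfolding Vp_def by (subst card_vec_set) auto

lemma spn_subset: "p > 0 \<Longrightarrow> spn p R f \<subseteq> Vp p"
  unfolding spn_def using vmod_in_Vp by blast

lemma finite_CS: "finite R \<Longrightarrow> finite (CS p R)"
  unfolding CS_def by (rule finite_PiE) auto

lemma card_CS: "finite R \<Longrightarrow> card (CS p R) = p ^ card R"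
  unfolding CS_def by (simp add: card_PiE)

lemma lin_cong_coeff:
  assumes "\<And>i. i \<in> R \<Longrightarrow> [c i = c' i] (mod int p)"
  shows "[lin c R f $ j = lin c' R f $ j] (mod int p)"
  unfolding lin_nth by (intro cong_sum cong_mult cong_refl assms)

lemma lin_cong_fun:
  assumes "\<And>i. i \<in> R \<Longrightarrow> f i = g i"
  shows "lin c R f = lin c R g"
  unfolding lin_def using assms by (intro sum.cong) auto

lemma lin_cong_c:
  assumes "\<And>i. i \<in> R \<Longrightarrow> c i = c' i"
  shows "lin c R f = lin c' R f"
  unfolding lin_def using assms by (intro sum.cong) auto

lemma lin_insert: "finite R \<Longrightarrow> r \<notin> R \<Longrightarrow> lin c (insert r R) f = c r *s f r + lin c R f"
  by (simp add: lin_def)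

lemma indep_cong:
  assumes "\<And>i. i \<in> R \<Longrightarrow> f i = g i"
  shows "indep p R f = indep p R g"
proof -
  have "\<And>c. lin c R f = lin c R g" by (rule lin_cong_fun) (rule assms)
  then show ?thesis unfolding indep_def by simp
qed

lemma spn_cong:
  assumes "\<And>i. i \<in> R \<Longrightarrow> f i = g i"
  shows "spn p R f = spn p R g"
proof -
  have "\<And>c. lin c R f = lin c R g" by (rule lin_cong_fun) (rule assms)
  then show ?thesis unfolding spn_def by simp
qed

lemma card_spn:
  assumes R: "finite R" and ind: "indep p R f" and p: "p > 0"
  shows "card (spn p R f) = p ^ card R"
proof -
  have "inj_on (\<lambda>c. vmod p (lin c R f)) (CS p R)"
  proof
    fix c c' assume c: "c \<in> CS p R" and c': "c' \<in> CS p R" and e: "vmod p (lin c R f) = vmod p (lin c' R f)"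
    define d where "d = restrict (\<lambda>i. (c i - c' i) mod int p) R"
    have dCS: "d \<in> CS p R" using p by (auto simp: d_def CS_def)
    have "vmod p (lin d R f) = 0"
      unfolding vmod_eq_0_iff
    proof
      fix j
      have "[lin d R f $ j = lin (\<lambda>i. c i - c' i) R f $ j] (mod int p)"
        by (rule lin_cong_coeff) (auto simp: d_def cong_def)
      also have "lin (\<lambda>i. c i - c' i) R f $ j = lin c R f $ j - lin c' R f $ j"
        by (simp add: lin_nth algebra_simps sum_subtractf)
      also have "[lin c R f $ j - lin c' R f $ j = 0] (mod int p)"
        using e unfolding vmod_eq_iff by (simp add: cong_iff_dvd_diff)
      finally show "[lin d R f $ j = 0] (mod int p)" .
    qed
    then have d0: "\<And>i. i \<in> R \<Longrightarrow> d i = 0" using ind dCS unfolding indep_def by blast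
    show "c = c'"
    proof (rule PiE_ext[of _ R "\<lambda>_. {0..<int p}"])
      show "c \<in> Pi\<^sub>E R (\<lambda>_. {0..<int p})" "c' \<in> Pi\<^sub>E R (\<lambda>_. {0..<int p})" using c c' by (auto simp: CS_def)
      fix i assume i: "i \<in> R"
      have "(c i - c' i) mod int p = 0" using d0[OF i] i by (simp add: d_def)
      then have "c i mod int p = c' i mod int p"
        by (simp only: mod_eq_dvd_iff mod_eq_0_iff_dvd)
      moreover have "c i \<in> {0..<int p}" "c' i \<in> {0..<int p}" using c c' i by (auto simp: CS_def)
      moreover have "c i mod int p = c i" "c' i mod int p = c' i"
        using \<open>c i \<in> {0..<int p}\<close> \<open>c' i \<in> {0..<int p}\<close> by (auto intro: mod_pos_pos_trivial)
      ultimately show "c i = c' i" by metis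
    qed
  qed
  then show ?thesis unfolding spn_def by (simp add: card_image card_CS R)
qed

lemma indep_insert:
  assumes R: "finite R" and r: "r \<notin> R" and p: "prime p" and fr: "f r \<in> Vp p"
  shows "indep p (insert r R) f \<longleftrightarrow> indep p R f \<and> f r \<notin> spn p R f"
proof
  have p1: "int p > 1" using p prime_gt_1_nat by simp
  assume ind: "indep p (insert r R) f"
  show "indep p R f \<and> f r \<notin> spn p R f"
  proof
    show "indep p R f"
      unfolding indep_def
    proof (rule ballI, rule impI)
      fix c assume c: "c \<in> CS p R" and z: "vmod p (lin c R f) = 0"
      define c' where "c' = c(r := 0)"
      have c'CS: "c' \<in> CS p (insert r R)" using c p1 by (auto simp: CS_def c'_def PiE_iff extensional_def)
      have "lin c' (insert r R) f = lin c R f"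
        using R r by (simp add: lin_insert c'_def, intro lin_cong_c) auto
      then have "vmod p (lin c' (insert r R) f) = 0" using z by simp
      then have "\<forall>i\<in>insert r R. c' i = 0" using ind c'CS unfolding indep_def by blast
      then show "\<forall>i\<in>R. c i = 0" using r unfolding c'_def by (metis fun_upd_other insertCI)
    qed
    show "f r \<notin> spn p R f"
    proof
      assume "f r \<in> spn p R f"
      then obtain c where c: "c \<in> CS p R" and fc: "f r = vmod p (lin c R f)" unfolding spn_def by blast
      define c' where "c' = c(r := int p - 1)"
      have c'CS: "c' \<in> CS p (insert r R)" using c p1 by (auto simp: CS_def c'_def PiE_iff extensional_def)
      have l: "lin c' (insert r R) f = (int p - 1) *s f r + lin c R f"
        using R r by (simp add: lin_insert c'_def, intro lin_cong_c) auto
      have "vmod p (lin c' (insert r R) f) = 0"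
        unfolding vmod_eq_0_iff
      proof
        fix j
        have fj: "f r $ j = lin c R f $ j mod int p" using fc by (simp add: vmod_def)
        have "lin c' (insert r R) f $ j = (int p - 1) * f r $ j + lin c R f $ j" by (simp add: l algebra_simps)
        also have "[\<dots> = (int p - 1) * f r $ j + f r $ j] (mod int p)"
          by (intro cong_add cong_refl) (simp add: fj cong_def)
        also have "(int p - 1) * f r $ j + f r $ j = int p * f r $ j" by (simp add: algebra_simps)
        also have "[int p * f r $ j = 0] (mod int p)" by (simp add: cong_def)
        finally show "[lin c' (insert r R) f $ j = 0] (mod int p)" .
      qed
      then have "c' r = 0" using ind c'CS unfolding indep_def by blast
      then show False using p1 by (simp add: c'_def)
    qed
  qed
next
  have p1: "int p > 1" using p prime_gt_1_nat by simp
  assume "indep p R f \<and> f r \<notin> spn p R f"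
  then have ind: "indep p R f" and ns: "f r \<notin> spn p R f" by auto
  show "indep p (insert r R) f"
    unfolding indep_def
  proof (rule ballI, rule impI)
    fix c assume c: "c \<in> CS p (insert r R)" and z: "vmod p (lin c (insert r R) f) = 0"
    have l: "lin c (insert r R) f = c r *s f r + lin c R f" using R r by (simp add: lin_insert)
    have cr: "c r \<in> {0..<int p}" using c by (auto simp: CS_def)
    have cR: "restrict c R \<in> CS p R" using c by (auto simp: CS_def)
    have lR: "lin (restrict c R) R f = lin c R f" by (rule lin_cong_c) auto
    show "\<forall>i\<in>insert r R. c i = 0"
    proof (cases "c r = 0")
      case True
      then have "vmod p (lin (restrict c R) R f) = 0" using z l lR by simp
      then have "\<forall>i\<in>R. restrict c R i = 0" using ind cR unfolding indep_def by blast
      then show ?thesis using True by auto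
    next
      case False
      have "\<not> int p dvd c r"
        using cr False by (intro zdvd_not_zless) auto
      then have "coprime (int p) (c r)" using p by (intro prime_imp_coprime) auto
      then have "coprime (c r) (int p)" by (simp add: coprime_commute)
      then obtain u where u: "[c r * u = 1] (mod int p)" using cong_solve_coprime_int by blast
      define d where "d = restrict (\<lambda>i. (- u * c i) mod int p) R"
      have dCS: "d \<in> CS p R" using p1 by (auto simp: d_def CS_def)
      have "vmod p (lin d R f) = f r"
      proof -
        have "vmod p (lin d R f) = vmod p (f r)"
          unfolding vmod_eq_iff
        proof
          fix j
          have z': "[c r * f r $ j + lin c R f $ j = 0] (mod int p)"
            using z l unfolding vmod_eq_0_iff by (metis vector_add_component vector_smult_component)
          have "[lin d R f $ j = lin (\<lambda>i. - u * c i) R f $ j] (mod int p)"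
            by (rule lin_cong_coeff) (auto simp: d_def cong_def)
          also have "lin (\<lambda>i. - u * c i) R f $ j = - u * lin c R f $ j"
            by (simp add: lin_nth sum_distrib_left algebra_simps)
          also have "[- u * lin c R f $ j = - u * (lin c R f $ j + c r * f r $ j) + (c r * u) * f r $ j] (mod int p)"
            by (simp add: algebra_simps)
          also have "[- u * (lin c R f $ j + c r * f r $ j) + (c r * u) * f r $ j = - u * 0 + 1 * f r $ j] (mod int p)"
            using z' by (intro cong_add cong_mult cong_refl u) (simp add: add.commute)
          finally show "[lin d R f $ j = f r $ j] (mod int p)" by simp
        qed
        then show ?thesis using fr by (simp add: vmod_Vp)
      qed
      then have "f r \<in> spn p R f" using dCS unfolding spn_def by force
      then show ?thesis using ns by simp
    qed
  qed
qed


lemma count_indep: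
  assumes p: "prime p" and R: "finite R"
  shows "card {f \<in> Pi\<^sub>E R (\<lambda>_. Vp p :: (int^'m::finite) set). indep p R f} = (\<Prod>i<card R. (p ^ CARD('m) - p ^ i))"
  using R
proof (induction R rule: finite_induct)
  case empty
  have "{f \<in> Pi\<^sub>E {} (\<lambda>_. Vp p :: (int^'m::finite) set). indep p {} f} = {\<lambda>_. undefined}"
    by (auto simp: indep_def)
  then show ?case by (metis card.empty card_insert_disjoint empty_iff finite.emptyI lessThan_0 prod.empty One_nat_def)
next
  case (insert r R)
  have p0: "p > 0" using p prime_gt_0_nat by blast
  let ?V = "Vp p :: (int^'m::finite) set"
  define G where "G = {g \<in> Pi\<^sub>E R (\<lambda>_. ?V). indep p R g}"
  define F where "F = {f \<in> Pi\<^sub>E (insert r R) (\<lambda>_. ?V). indep p (insert r R) f}"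
  have bij: "bij_betw (\<lambda>(g,v). g(r := v)) (SIGMA g:G. ?V - spn p R g) F"
  proof (rule bij_betwI[where g = "\<lambda>f. (f(r := undefined), f r)"])
    show "(\<lambda>(g,v). g(r := v)) \<in> (SIGMA g:G. ?V - spn p R g) \<rightarrow> F"
    proof
      fix x assume "x \<in> (SIGMA g:G. ?V - spn p R g)"
      then obtain g v where x: "x = (g, v)" and g: "g \<in> G" and v: "v \<in> ?V" "v \<notin> spn p R g" by auto
      have "g(r := v) \<in> Pi\<^sub>E (insert r R) (\<lambda>_. ?V)" using g v by (auto simp: G_def PiE_iff extensional_def)
      moreover have "indep p (insert r R) (g(r := v))"
      proof -
        have e1: "indep p R (g(r := v)) = indep p R g" by (rule indep_cong) (use insert in auto)
        have e2: "spn p R (g(r := v)) = spn p R g" by (rule spn_cong) (use insert in auto)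
        show ?thesis using indep_insert[of R r p "g(r := v)"] insert p g v e1 e2 by (auto simp: G_def)
      qed
      ultimately show "(\<lambda>(g,v). g(r := v)) x \<in> F" using x by (simp add: F_def)
    qed
    show "(\<lambda>f. (f(r := undefined), f r)) \<in> F \<rightarrow> (SIGMA g:G. ?V - spn p R g)"
    proof
      fix f assume f: "f \<in> F"
      have e1: "indep p R (f(r := undefined)) = indep p R f" by (rule indep_cong) (use insert in auto)
      have e2: "spn p R (f(r := undefined)) = spn p R f" by (rule spn_cong) (use insert in auto)
      have fr: "f r \<in> ?V" using f by (auto simp: F_def)
      have "indep p R f \<and> f r \<notin> spn p R f" using indep_insert[of R r p f] insert p f fr by (auto simp: F_def)
      moreover have "f(r := undefined) \<in> Pi\<^sub>E R (\<lambda>_. ?V)" using f insert by (auto simp: F_def PiE_iff extensional_def)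
      ultimately show "(\<lambda>f. (f(r := undefined), f r)) f \<in> (SIGMA g:G. ?V - spn p R g)"
        using e1 e2 fr by (auto simp: G_def)
    qed
    fix x assume "x \<in> (SIGMA g:G. ?V - spn p R g)"
    then obtain g v where x: "x = (g, v)" and g: "g \<in> G" by auto
    have "g r = undefined" using g insert by (auto simp: G_def PiE_iff extensional_def)
    then show "(\<lambda>f. (f(r := undefined), f r)) ((\<lambda>(g,v). g(r := v)) x) = x" using x by auto
  next
    fix f assume "f \<in> F"
    show "(\<lambda>(g,v). g(r := v)) ((\<lambda>f. (f(r := undefined), f r)) f) = f" by auto
  qed
  have finG: "finite G" unfolding G_def by (rule finite_subset[of _ "Pi\<^sub>E R (\<lambda>_. ?V)"]) (auto intro!: finite_PiE simp: finite_Vp insert(1))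
  have "card F = card (SIGMA g:G. ?V - spn p R g)" using bij_betw_same_card[OF bij] by simp
  also have "\<dots> = (\<Sum>g\<in>G. card (?V - spn p R g))"
    by (rule card_SigmaI) (auto simp: finG finite_Vp)
  also have "\<dots> = (\<Sum>g\<in>G. p ^ CARD('m) - p ^ card R)"
  proof (rule sum.cong[OF refl])
    fix g assume g: "g \<in> G"
    have "card (?V - spn p R g) = card ?V - card (spn p R g)"
      by (rule card_Diff_subset) (auto intro: finite_subset[OF spn_subset[OF p0]] simp: finite_Vp spn_subset[OF p0])
    also have "\<dots> = p ^ CARD('m) - p ^ card R"
      using g insert p0 by (simp add: card_Vp card_spn G_def)
    finally show "card (?V - spn p R g) = p ^ CARD('m) - p ^ card R" .
  qed
  also have "\<dots> = card G * (p ^ CARD('m) - p ^ card R)" by simp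
  also have "\<dots> = (\<Prod>i<card (insert r R). (p ^ CARD('m) - p ^ i))"
    using insert by (simp add: G_def)
  finally show ?case by (simp add: F_def)
qed


lemma row_eq_nth: "row i A = A $ i"
  by (simp add: row_def vec_eq_iff)

lemma det_row_comb:
  fixes A :: "int^'n::finite^'n"
  assumes T: "finite T" and j: "j \<notin> T"
  shows "det (\<chi> k. if k = j then x + (\<Sum>i\<in>T. c i *s A$i) else A$k) = det (\<chi> k. if k = j then x else A$k)"
  using T j
proof (induction T arbitrary: x rule: finite_induct)
  case empty
  then show ?case by (simp only: sum.empty add_0_right)
next
  case (insert t T)
  have tj: "t \<noteq> j" using insert by auto
  have "x + (\<Sum>i\<in>insert t T. c i *s A$i) = (x + (\<Sum>i\<in>T. c i *s A$i)) + c t *s A$t"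
    using insert by (simp add: algebra_simps)
  then have "det (\<chi> k. if k = j then x + (\<Sum>i\<in>insert t T. c i *s A$i) else A$k) =
     det (\<chi> k. if k = j then (x + (\<Sum>i\<in>T. c i *s A$i)) + c t *s A$t else A$k)"
    by (simp add: add.assoc cong: if_cong)
  also have "\<dots> = det (\<chi> k. if k = j then x + (\<Sum>i\<in>T. c i *s A$i) else A$k) +
                   det (\<chi> k. if k = j then c t *s A$t else A$k)"
    using det_row_add[of j "\<lambda>_. x + (\<Sum>i\<in>T. c i *s A$i)" "\<lambda>_. c t *s A$t" "\<lambda>k. A$k"] by simp
  also have "det (\<chi> k. if k = j then c t *s A$t else A$k) = c t * det (\<chi> k. if k = j then A$t else A$k)"
    using det_row_mul[of j "c t" "\<lambda>_. A$t" "\<lambda>k. A$k"] by simp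
  also have "det (\<chi> k. if k = j then A$t else A$k) = 0"
    by (rule det_identical_rows[OF tj[symmetric]]) (simp add: row_def vec_eq_iff tj)
  finally show ?case using insert by simp
qed

lemma dep_imp_dvd_det:
  fixes A :: "int^'n::finite^'n"
  assumes p: "prime p" and nind: "\<not> indep p UNIV (\<lambda>i. A$i)"
  shows "int p dvd det A"
proof -
  obtain c j where c: "c \<in> CS p UNIV" and z: "vmod p (lin c UNIV (\<lambda>i. A$i)) = 0" and cj: "c j \<noteq> 0"
    using nind unfolding indep_def by blast
  have l: "lin c UNIV (\<lambda>i. A$i) = c j *s A$j + (\<Sum>i\<in>UNIV-{j}. c i *s A$i)"
    unfolding lin_def by (simp add: sum.remove)
  define M where "M = (\<chi> k. if k = j then lin c UNIV (\<lambda>i. A$i) else A$k)"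
  have "det M = det (\<chi> k. if k = j then c j *s A$j else A$k)"
    unfolding M_def l by (rule det_row_comb) auto
  also have "\<dots> = c j * det (\<chi> k. if k = j then A$j else A$k)"
    using det_row_mul[of j "c j" "\<lambda>_. A$j" "\<lambda>k. A$k"] by simp
  also have "(\<chi> k. if k = j then A$j else A$k) = A" by (simp add: vec_eq_iff)
  finally have dM: "det M = c j * det A" .
  have "[det M = det ((\<chi> k. if k = j then 0 else A$k) :: int^'n^'n)] (mod int p)"
  proof (rule det_cong)
    fix k l
    show "[M$k$l = (\<chi> k. if k = j then 0 else A$k)$k$l] (mod int p)"
      using z unfolding vmod_eq_0_iff M_def by (cases "k = j") auto
  qed
  also have "det ((\<chi> k. if k = j then 0 else A$k) :: int^'n^'n) = 0"
    by (rule det_row_0)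
  finally have "int p dvd c j * det A" using dM by (simp add: cong_0_iff)
  moreover have "\<not> int p dvd c j"
  proof -
    have "0 \<le> c j" "c j < int p" using c by (auto simp: CS_def PiE_iff)
    then show ?thesis using cj by (intro zdvd_not_zless) auto
  qed
  moreover have "prime (int p)" using p by simp
  ultimately show ?thesis using prime_dvd_mult_iff by blast
qed

lemma indep_imp_not_dvd_det:
  fixes A :: "int^'n::finite^'n"
  assumes p: "prime p" and ind: "indep p UNIV (\<lambda>i. A$i)"
  shows "\<not> int p dvd det A"
proof
  assume dv: "int p dvd det A"
  have p0: "p > 0" and p1: "int p > 1" using p prime_gt_1_nat by (auto simp: prime_gt_0_nat)
  have "card (spn p UNIV (\<lambda>i. A$i)) = p ^ CARD('n)" using card_spn[OF _ ind p0] by simp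
  then have sV: "spn p UNIV (\<lambda>i. A$i) = (Vp p :: (int^'n) set)"
    by (intro card_subset_eq) (auto simp: finite_Vp card_Vp spn_subset[OF p0])
  define e where "e = (\<lambda>k::'n. (\<chi> l. if l = k then 1 else 0) :: int^'n)"
  have "\<forall>k. \<exists>c. c \<in> CS p UNIV \<and> vmod p (lin c UNIV (\<lambda>i. A$i)) = e k"
  proof
    fix k
    have "e k \<in> Vp p" unfolding e_def Vp_def using p1 by simp
    then have "e k \<in> spn p UNIV (\<lambda>i. A$i)" using sV by simp
    then show "\<exists>c. c \<in> CS p UNIV \<and> vmod p (lin c UNIV (\<lambda>i. A$i)) = e k"
      unfolding spn_def by auto
  qed
  then obtain C where C: "\<And>k. C k \<in> CS p UNIV" "\<And>k. vmod p (lin (C k) UNIV (\<lambda>i. A$i)) = e k"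
    by metis
  define B :: "int^'n^'n" where "B = (\<chi> k i. C k i)"
  have "[det (B ** A) = det (mat 1 :: int^'n^'n)] (mod int p)"
  proof (rule det_cong)
    fix k l
    have "(B ** A)$k$l = lin (C k) UNIV (\<lambda>i. A$i) $ l"
      by (simp add: B_def matrix_matrix_mult_def lin_nth)
    moreover have "lin (C k) UNIV (\<lambda>i. A$i) $ l mod int p = e k $ l"
      using C(2)[of k] by (simp add: vmod_def vec_eq_iff)
    moreover have "e k $ l = (mat 1 :: int^'n^'n) $ k $ l" by (simp add: e_def mat_def)
    ultimately show "[(B ** A)$k$l = (mat 1 :: int^'n^'n)$k$l] (mod int p)"
      using p1 by (simp add: cong_def e_def mat_def)
  qed
  then have "[det B * det A = 1] (mod int p)" by (simp add: det_mul)
  moreover have "[det B * det A = 0] (mod int p)" using dv by (simp add: cong_0_iff)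
  ultimately have "[1 = 0] (mod int p)" by (metis cong_sym cong_trans)
  then show False using p1 by (simp add: cong_def)
qed


definition Mbox :: "nat \<Rightarrow> (int^'n::finite^'n) set" where "Mbox d = {A. \<forall>i j. A$i$j \<in> {0..<int d}}"

lemma finite_Mbox: "finite (Mbox d)"
  unfolding Mbox_def by (rule finite_mat_set) auto

lemma card_Mbox: "card (Mbox d :: (int^'n::finite^'n) set) = d ^ (CARD('n) * CARD('n))"
  unfolding Mbox_def by (subst card_mat_set) (auto simp: power_mult)

lemma card_nonsing_p:
  assumes p: "prime p"
  shows "card {A \<in> Mbox p :: (int^'n::finite^'n) set. \<not> int p dvd det A} = (\<Prod>i<CARD('n). (p ^ CARD('n) - p ^ i))"
proof -
  have eq: "{A \<in> Mbox p :: (int^'n::finite^'n) set. \<not> int p dvd det A} = {A \<in> Mbox p. indep p UNIV (\<lambda>i. A$i)}"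
    using dep_imp_dvd_det[OF p] indep_imp_not_dvd_det[OF p] by blast
  have "bij_betw vec_nth {A \<in> Mbox p :: (int^'n::finite^'n) set. indep p UNIV (\<lambda>i. A$i)}
         {f \<in> Pi\<^sub>E (UNIV::'n set) (\<lambda>_. Vp p :: (int^'n) set). indep p UNIV f}"
    unfolding bij_betw_def
  proof
    show "inj_on vec_nth {A \<in> Mbox p :: (int^'n::finite^'n) set. indep p UNIV (\<lambda>i. A$i)}"
      by (auto simp: inj_on_def vec_eq_iff)
    show "vec_nth ` {A \<in> Mbox p :: (int^'n::finite^'n) set. indep p UNIV (\<lambda>i. A$i)} =
          {f \<in> Pi\<^sub>E (UNIV::'n set) (\<lambda>_. Vp p :: (int^'n) set). indep p UNIV f}"
    proof
      show "vec_nth ` {A \<in> Mbox p :: (int^'n::finite^'n) set. indep p UNIV (\<lambda>i. A$i)} \<subseteq>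
          {f \<in> Pi\<^sub>E (UNIV::'n set) (\<lambda>_. Vp p :: (int^'n) set). indep p UNIV f}"
        by (auto simp: Mbox_def Vp_def)
      show "{f \<in> Pi\<^sub>E (UNIV::'n set) (\<lambda>_. Vp p :: (int^'n) set). indep p UNIV f} \<subseteq>
            vec_nth ` {A \<in> Mbox p :: (int^'n::finite^'n) set. indep p UNIV (\<lambda>i. A$i)}"
      proof
        fix f assume f: "f \<in> {f \<in> Pi\<^sub>E (UNIV::'n set) (\<lambda>_. Vp p :: (int^'n) set). indep p UNIV f}"
        have fe: "f = vec_nth (vec_lambda f)" by (simp add: fun_eq_iff)
        have "vec_lambda f \<in> {A \<in> Mbox p :: (int^'n::finite^'n) set. indep p UNIV (\<lambda>i. A$i)}"
          using f by (auto simp: Mbox_def Vp_def fe[symmetric])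
        moreover note fe
        ultimately show "f \<in> vec_nth ` {A \<in> Mbox p :: (int^'n::finite^'n) set. indep p UNIV (\<lambda>i. A$i)}"
          by blast
      qed
    qed
  qed
  then show ?thesis unfolding eq using bij_betw_same_card count_indep[OF p, of "UNIV::'n set"] by fastforce
qed

lemma card_sing_p:
  assumes p: "prime p"
  shows "card {A \<in> Mbox p :: (int^'n::finite^'n) set. int p dvd det A} =
     p ^ (CARD('n) * CARD('n)) - (\<Prod>i<CARD('n). (p ^ CARD('n) - p ^ i))"
proof -
  let ?M = "Mbox p :: (int^'n::finite^'n) set"
  have u: "?M = {A \<in> ?M. int p dvd det A} \<union> {A \<in> ?M. \<not> int p dvd det A}" by auto
  have "card ?M = card {A \<in> ?M. int p dvd det A} + card {A \<in> ?M. \<not> int p dvd det A}"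
    by (subst u, rule card_Un_disjoint) (auto simp: finite_Mbox)
  then show ?thesis using card_nonsing_p[OF p, where 'n='n] card_Mbox[of p, where 'n='n] by simp
qed


definition mmod :: "nat \<Rightarrow> int^'n::finite^'n \<Rightarrow> int^'n^'n" where "mmod d A = (\<chi> i j. A$i$j mod int d)"

definition singc :: "'n::finite itself \<Rightarrow> nat \<Rightarrow> nat" where
  "singc _ d = card {A \<in> (Mbox d :: (int^'n^'n) set). int d dvd det A}"

lemma mmod_in: "d > 0 \<Longrightarrow> mmod d A \<in> Mbox d"
  by (simp add: mmod_def Mbox_def)

lemma mmod_Mbox: "A \<in> Mbox d \<Longrightarrow> mmod d A = A"
  by (simp add: mmod_def Mbox_def vec_eq_iff)

lemma det_mmod_cong: "[det (mmod d A) = det A] (mod int d)"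
  by (rule det_cong) (simp add: mmod_def cong_def)

lemma dvd_det_mmod: "int d dvd det (mmod d A) \<longleftrightarrow> int d dvd det A"
  using det_mmod_cong[of d A] by (simp add: cong_dvd_iff)

lemma mod_mod_dvd_int: "(x::int) mod (a * b) mod a = x mod a"
  by (simp add: mod_mod_cancel)

lemma singc_mult:
  assumes cop: "coprime a b" and a: "a > 0" and b: "b > 0"
  shows "singc TYPE('n::finite) (a * b) = singc TYPE('n) a * singc TYPE('n) b"
proof -
  let ?f = "\<lambda>A::int^'n^'n. (mmod a A, mmod b A)"
  let ?S = "{A \<in> (Mbox (a*b) :: (int^'n^'n) set). int (a*b) dvd det A}"
  let ?T = "{A \<in> (Mbox a :: (int^'n^'n) set). int a dvd det A} \<times> {A \<in> (Mbox b :: (int^'n^'n) set). int b dvd det A}"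
  have copi: "coprime (int a) (int b)" using cop by simp
  have inj: "inj_on ?f (Mbox (a*b))"
  proof
    fix A A' :: "int^'n^'n"
    assume A: "A \<in> Mbox (a*b)" and A': "A' \<in> Mbox (a*b)" and e: "?f A = ?f A'"
    show "A = A'"
      unfolding vec_eq_iff
    proof (intro allI)
      fix i j
      have "[A$i$j = A'$i$j] (mod int a)" "[A$i$j = A'$i$j] (mod int b)"
        using e by (auto simp: mmod_def vec_eq_iff cong_def)
      then have "[A$i$j = A'$i$j] (mod int a * int b)" using copi by (rule coprime_cong_mult)
      then have "A$i$j mod (int a * int b) = A'$i$j mod (int a * int b)" by (simp add: cong_def)
      moreover have "A$i$j \<in> {0..<int a * int b}" "A'$i$j \<in> {0..<int a * int b}"
        using A A' by (auto simp: Mbox_def)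
      ultimately show "A$i$j = A'$i$j" by simp
    qed
  qed
  have img: "?f ` Mbox (a*b) = Mbox a \<times> Mbox b"
  proof (rule card_subset_eq)
    show "finite (Mbox a \<times> Mbox b :: ((int^'n^'n) \<times> (int^'n^'n)) set)" by (simp add: finite_Mbox)
    show "?f ` Mbox (a*b) \<subseteq> Mbox a \<times> Mbox b" using a b by (auto simp: mmod_in)
    show "card (?f ` Mbox (a*b)) = card (Mbox a \<times> Mbox b :: ((int^'n^'n) \<times> (int^'n^'n)) set)"
      using inj by (simp add: card_image card_Mbox card_cartesian_product power_mult_distrib)
  qed
  have "bij_betw ?f ?S ?T"
    unfolding bij_betw_def
  proof
    show "inj_on ?f ?S" using inj by (rule inj_on_subset) auto
    show "?f ` ?S = ?T"
    proof
      show "?f ` ?S \<subseteq> ?T"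
      proof
        fix x assume "x \<in> ?f ` ?S"
        then obtain A where A: "A \<in> Mbox (a*b)" "int (a*b) dvd det A" and x: "x = ?f A" by auto
        have "int a dvd det A" "int b dvd det A" using A(2) by (auto intro: dvd_mult_left dvd_mult_right)
        then show "x \<in> ?T" using x a b by (auto simp: mmod_in dvd_det_mmod)
      qed
      show "?T \<subseteq> ?f ` ?S"
      proof
        fix x assume x: "x \<in> ?T"
        then have "x \<in> Mbox a \<times> Mbox b" by blast
        then have "x \<in> ?f ` Mbox (a*b)" by (simp only: img)
        then obtain A where A: "A \<in> Mbox (a*b)" and xA: "x = ?f A" by blast
        have "int a dvd det (mmod a A)" "int b dvd det (mmod b A)" using x xA by auto
        then have "int a dvd det A" "int b dvd det A" by (auto simp: dvd_det_mmod)
        then have "int a * int b dvd det A" using copi by (rule divides_mult)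
        then show "x \<in> ?f ` ?S" using A xA by auto
      qed
    qed
  qed
  then show ?thesis unfolding singc_def by (simp add: bij_betw_same_card card_cartesian_product)
qed

lemma singc_prod:
  assumes "finite S" "\<And>p. p \<in> S \<Longrightarrow> prime p"
  shows "singc TYPE('n::finite) (\<Prod>S) = (\<Prod>p\<in>S. singc TYPE('n) p)"
  using assms
proof (induction S rule: finite_induct)
  case empty
  have "{A \<in> (Mbox 1 :: (int^'n^'n) set). int 1 dvd det A} = Mbox 1" by auto
  then show ?case by (simp add: singc_def card_Mbox)
next
  case (insert p S)
  have cop: "coprime p (\<Prod>S)"
    using insert by (intro prod_coprime_right) (metis insertCI primes_coprime)
  have "\<Prod>S > 0" using insert by (metis not_prime_0 prod_pos insertCI neq0_conv)
  moreover have "p > 0" using insert by (simp add: prime_gt_0_nat)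
  ultimately show ?case using insert cop by (simp add: singc_mult)
qed


lemma lattice_eq:
  fixes d :: int assumes d: "d > 0"
  shows "{k::int. a \<le> r + d*k \<and> r + d*k \<le> b} = {\<lceil>real_of_int (a - r) / d\<rceil>..\<lfloor>real_of_int (b - r) / d\<rfloor>}"
proof -
  have "a \<le> r + d*k \<longleftrightarrow> \<lceil>real_of_int (a - r) / d\<rceil> \<le> k" for k
  proof -
    have "\<lceil>real_of_int (a - r) / d\<rceil> \<le> k \<longleftrightarrow> real_of_int (a - r) / d \<le> k" by (simp add: ceiling_le_iff)
    also have "\<dots> \<longleftrightarrow> real_of_int (a - r) \<le> k * d" using d by (simp add: pos_divide_le_eq)
    also have "\<dots> \<longleftrightarrow> a \<le> r + d*k" by (simp add: algebra_simps flip: of_int_mult of_int_diff of_int_add) 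
    finally show ?thesis by simp
  qed
  moreover have "r + d*k \<le> b \<longleftrightarrow> k \<le> \<lfloor>real_of_int (b - r) / d\<rfloor>" for k
  proof -
    have "k \<le> \<lfloor>real_of_int (b - r) / d\<rfloor> \<longleftrightarrow> k \<le> real_of_int (b - r) / d" by (simp add: le_floor_iff)
    also have "\<dots> \<longleftrightarrow> k * d \<le> real_of_int (b - r)" using d by (simp add: pos_le_divide_eq)
    also have "\<dots> \<longleftrightarrow> r + d*k \<le> b" by (simp add: algebra_simps flip: of_int_mult of_int_diff of_int_add)
    finally show ?thesis by simp
  qed
  ultimately show ?thesis by auto
qed

lemma card_res_class:
  fixes d :: int assumes d: "d > 0" and r: "0 \<le> r" "r < d" and ab: "a \<le> b"
  shows "\<bar>real (card {x\<in>{a..b}. x mod d = r}) - real_of_int (b - a) / d\<bar> \<le> 1"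
proof -
  have "{x\<in>{a..b}. x mod d = r} = (\<lambda>k. r + d*k) ` {k::int. a \<le> r + d*k \<and> r + d*k \<le> b}"
  proof (rule set_eqI)
    fix x
    show "x \<in> {x\<in>{a..b}. x mod d = r} \<longleftrightarrow> x \<in> (\<lambda>k. r + d*k) ` {k::int. a \<le> r + d*k \<and> r + d*k \<le> b}"
    proof
      assume x: "x \<in> {x\<in>{a..b}. x mod d = r}"
      then have xm: "x mod d = r" by simp
      have "x = r + d * (x div d)" using div_mult_mod_eq[of x d] xm by (simp add: mult.commute)
      moreover have "a \<le> r + d * (x div d) \<and> r + d * (x div d) \<le> b" using x calculation by simp
      ultimately show "x \<in> (\<lambda>k. r + d*k) ` {k::int. a \<le> r + d*k \<and> r + d*k \<le> b}"
        by (intro image_eqI[of x _ "x div d"]) auto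
    next
      assume "x \<in> (\<lambda>k. r + d*k) ` {k::int. a \<le> r + d*k \<and> r + d*k \<le> b}"
      then obtain k where k: "x = r + d*k" "a \<le> r + d*k" "r + d*k \<le> b" by auto
      have "x mod d = r" using k r d by (simp add: mod_pos_pos_trivial)
      then show "x \<in> {x\<in>{a..b}. x mod d = r}" using k by auto
    qed
  qed
  moreover have "inj (\<lambda>k. r + d*k)" using d by (auto simp: inj_def)
  ultimately have "card {x\<in>{a..b}. x mod d = r} = card {k::int. a \<le> r + d*k \<and> r + d*k \<le> b}"
    by (simp add: card_image inj_on_subset)
  also have "\<dots> = nat (\<lfloor>real_of_int (b - r) / d\<rfloor> - \<lceil>real_of_int (a - r) / d\<rceil> + 1)"
    by (simp add: lattice_eq[OF d])
  finally have c: "real (card {x\<in>{a..b}. x mod d = r}) = real (nat (\<lfloor>real_of_int (b - r) / d\<rfloor> - \<lceil>real_of_int (a - r) / d\<rceil> + 1))" by simp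
  define u where "u = real_of_int (b - r) / d"
  define v where "v = real_of_int (a - r) / d"
  have uv: "u - v = real_of_int (b - a) / d" by (simp add: u_def v_def diff_divide_distrib)
  have f1: "real_of_int \<lfloor>u\<rfloor> \<le> u" "u < real_of_int \<lfloor>u\<rfloor> + 1" by linarith+
  have f2: "v \<le> real_of_int \<lceil>v\<rceil>" "real_of_int \<lceil>v\<rceil> < v + 1" by linarith+
  have nn: "0 \<le> real_of_int (b - a) / d" using ab d by simp
  show ?thesis
  proof (cases "\<lfloor>u\<rfloor> - \<lceil>v\<rceil> + 1 \<ge> 0")
    case True
    then have "real (nat (\<lfloor>u\<rfloor> - \<lceil>v\<rceil> + 1)) = real_of_int \<lfloor>u\<rfloor> - real_of_int \<lceil>v\<rceil> + 1" by simp
    then show ?thesis unfolding c u_def[symmetric] v_def[symmetric] abs_le_iff using f1 f2 uv by linarith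
  next
    case False
    then have "real (nat (\<lfloor>u\<rfloor> - \<lceil>v\<rceil> + 1)) = 0" by simp
    moreover have "real_of_int \<lfloor>u\<rfloor> - real_of_int \<lceil>v\<rceil> + 1 \<le> -1" using False by linarith
    ultimately show ?thesis unfolding c u_def[symmetric] v_def[symmetric] abs_le_iff using f1 f2 uv nn by linarith
  qed
qed

lemma prod_approx:
  fixes a :: "'a \<Rightarrow> real"
  assumes "finite I" "\<And>i. i \<in> I \<Longrightarrow> 0 \<le> a i" "\<And>i. i \<in> I \<Longrightarrow> \<bar>a i - X\<bar> \<le> 2" "X \<ge> 0"
  shows "\<bar>(\<Prod>i\<in>I. a i) - X ^ card I\<bar> \<le> (X + 2) ^ card I - X ^ card I"
  using assms
proof (induction I rule: finite_induct)
  case empty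
  then show ?case by simp
next
  case (insert i I)
  let ?b = "\<Prod>i\<in>I. a i"
  have IH: "\<bar>?b - X ^ card I\<bar> \<le> (X + 2) ^ card I - X ^ card I" using insert by auto
  have b0: "?b \<ge> 0" using insert by (auto intro: prod_nonneg)
  have bb: "?b \<le> (X+2) ^ card I" using IH by linarith
  have ai: "\<bar>a i - X\<bar> \<le> 2" using insert by auto
  have "\<bar>a i * ?b - X * X ^ card I\<bar> = \<bar>(a i - X) * ?b + X * (?b - X ^ card I)\<bar>" by (simp add: algebra_simps)
  also have "\<dots> \<le> \<bar>a i - X\<bar> * ?b + X * \<bar>?b - X ^ card I\<bar>"
  proof -
    have "\<bar>(a i - X) * ?b + X * (?b - X ^ card I)\<bar> \<le> \<bar>(a i - X) * ?b\<bar> + \<bar>X * (?b - X ^ card I)\<bar>"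
      by (rule abs_triangle_ineq)
    also have "\<dots> = \<bar>a i - X\<bar> * ?b + X * \<bar>?b - X ^ card I\<bar>"
      using b0 insert(6) by (simp add: abs_mult)
    finally show ?thesis .
  qed
  also have "\<dots> \<le> 2 * (X+2) ^ card I + X * ((X + 2) ^ card I - X ^ card I)"
    using ai b0 bb IH insert(6) by (intro add_mono mult_mono mult_left_mono) auto
  also have "\<dots> = (X + 2) ^ Suc (card I) - X ^ Suc (card I)" by (simp add: algebra_simps)
  finally show ?case using insert by simp
qed

lemma pow_diff_bound:
  fixes X :: real assumes "X \<ge> 0"
  shows "(X + 2) ^ k - X ^ k \<le> 2 * k * (X + 2) ^ (k - 1)"
proof (induction k)
  case 0
  then show ?case by simp
next
  case (Suc k)
  have "(X + 2) ^ Suc k - X ^ Suc k = (X + 2) * ((X+2)^k - X^k) + 2 * X ^ k" by (simp add: algebra_simps)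
  also have "\<dots> \<le> (X + 2) * (2 * k * (X + 2) ^ (k - 1)) + 2 * (X+2) ^ k"
    using Suc assms by (intro add_mono mult_left_mono power_mono) auto
  also have "\<dots> = 2 * Suc k * (X + 2) ^ k"
    by (cases k) (simp_all add: algebra_simps)
  finally show ?case by simp
qed


lemma box_dvd_split:
  assumes d: "d > 0"
  shows "card {A \<in> int_matrices_bounded H :: (int^'n::finite^'n) set. int d dvd det A} =
    (\<Sum>C\<in>{C \<in> Mbox d :: (int^'n^'n) set. int d dvd det C}. card {A \<in> int_matrices_bounded H. mmod d A = C})"
proof -
  let ?B = "int_matrices_bounded H :: (int^'n::finite^'n) set"
  let ?SC = "{C \<in> Mbox d :: (int^'n^'n) set. int d dvd det C}"
  have eq: "{A \<in> ?B. int d dvd det A} = (\<Union>C\<in>?SC. {A \<in> ?B. mmod d A = C})"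
  proof
    show "{A \<in> ?B. int d dvd det A} \<subseteq> (\<Union>C\<in>?SC. {A \<in> ?B. mmod d A = C})"
    proof
      fix A assume A: "A \<in> {A \<in> ?B. int d dvd det A}"
      then have "mmod d A \<in> ?SC" using d by (simp add: mmod_in dvd_det_mmod)
      then show "A \<in> (\<Union>C\<in>?SC. {A \<in> ?B. mmod d A = C})" using A by blast
    qed
    show "(\<Union>C\<in>?SC. {A \<in> ?B. mmod d A = C}) \<subseteq> {A \<in> ?B. int d dvd det A}"
    proof
      fix A assume "A \<in> (\<Union>C\<in>?SC. {A \<in> ?B. mmod d A = C})"
      then obtain C where "C \<in> ?SC" "A \<in> ?B" "mmod d A = C" by blast
      then show "A \<in> {A \<in> ?B. int d dvd det A}" using dvd_det_mmod[of d A] by simp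
    qed
  qed
  show ?thesis unfolding eq
    by (rule card_UN_disjoint) (auto simp: finite_Mbox finite_box)
qed

lemma fiber_card:
  "card {A \<in> int_matrices_bounded H :: (int^'n::finite^'n) set. mmod d A = C} =
    (\<Prod>i\<in>UNIV. \<Prod>j\<in>UNIV. card {x\<in>{-H..H}. x mod int d = C$i$j})"
proof -
  have "{A \<in> int_matrices_bounded H :: (int^'n::finite^'n) set. mmod d A = C} =
        {A. \<forall>i j. A$i$j \<in> {x\<in>{-H..H}. x mod int d = C$i$j}}"
    unfolding box_eq by (auto simp: mmod_def vec_eq_iff)
  moreover have "card {A::int^'n^'n. \<forall>i j. A$i$j \<in> {x\<in>{-H..H}. x mod int d = C$i$j}} =
    (\<Prod>i\<in>UNIV. \<Prod>j\<in>UNIV. card {x\<in>{-H..H}. x mod int d = C$i$j})"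
    by (rule card_mat_set) (rule finite_subset[of _ "{-H..H}"], auto)
  ultimately show ?thesis by simp
qed

lemma fiber_approx:
  assumes d: "d > 0" and H: "H \<ge> 0" and C: "C \<in> Mbox d"
  defines "X \<equiv> real_of_int (2*H+1) / real d"
  shows "\<bar>real (card {A \<in> int_matrices_bounded H :: (int^'n::finite^'n) set. mmod d A = C}) - X ^ (CARD('n)*CARD('n))\<bar>
     \<le> (X + 2) ^ (CARD('n)*CARD('n)) - X ^ (CARD('n)*CARD('n))"
proof -
  define a where "a = (\<lambda>x::'n\<times>'n. real (card {y\<in>{-H..H}. y mod int d = C$(fst x)$(snd x)}))"
  have "real (card {A \<in> int_matrices_bounded H :: (int^'n::finite^'n) set. mmod d A = C}) = (\<Prod>x\<in>UNIV. a x)"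
    unfolding fiber_card a_def by (simp add: prod_UNIV_pairs)
  moreover have "\<bar>(\<Prod>x\<in>UNIV. a x) - X ^ card (UNIV::('n\<times>'n) set)\<bar> \<le> (X + 2) ^ card (UNIV::('n\<times>'n) set) - X ^ card (UNIV::('n\<times>'n) set)"
  proof (rule prod_approx)
    show "X \<ge> 0" using H by (simp add: X_def)
    fix x :: "'n \<times> 'n"
    show "0 \<le> a x" by (simp add: a_def)
    have r: "0 \<le> C$(fst x)$(snd x)" "C$(fst x)$(snd x) < int d" using C by (auto simp: Mbox_def)
    have "\<bar>a x - real_of_int (H - (-H)) / real_of_int (int d)\<bar> \<le> 1"
      unfolding a_def by (rule card_res_class) (use d r H in auto)
    moreover have "X = real_of_int (H - (-H)) / real_of_int (int d) + 1 / real d"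
      by (simp add: X_def add_divide_distrib)
    moreover have "1 / real d \<le> 1" using d by simp
    moreover have "1 / real d \<ge> 0" by simp
    ultimately show "\<bar>a x - X\<bar> \<le> 2" by linarith
  qed simp
  ultimately show ?thesis by simp
qed

lemma equidist:
  assumes d: "d > 0" and H: "H \<ge> 0"
  defines "X \<equiv> real_of_int (2*H+1) / real d"
  shows "\<bar>real (card {A \<in> int_matrices_bounded H :: (int^'n::finite^'n) set. int d dvd det A}) - real (singc TYPE('n) d) * X ^ (CARD('n)*CARD('n))\<bar>
     \<le> real (singc TYPE('n) d) * ((X + 2) ^ (CARD('n)*CARD('n)) - X ^ (CARD('n)*CARD('n)))"
proof -
  let ?SC = "{C \<in> Mbox d :: (int^'n^'n) set. int d dvd det C}"
  let ?m = "CARD('n)*CARD('n)"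
  have "real (card {A \<in> int_matrices_bounded H :: (int^'n::finite^'n) set. int d dvd det A}) - real (singc TYPE('n) d) * X ^ ?m
     = (\<Sum>C\<in>?SC. real (card {A \<in> int_matrices_bounded H :: (int^'n::finite^'n) set. mmod d A = C}) - X ^ ?m)"
    by (simp add: box_dvd_split[OF d] singc_def sum_subtractf)
  also have "\<bar>\<dots>\<bar> \<le> (\<Sum>C\<in>?SC. \<bar>real (card {A \<in> int_matrices_bounded H :: (int^'n::finite^'n) set. mmod d A = C}) - X ^ ?m\<bar>)"
    by (rule sum_abs)
  also have "\<dots> \<le> (\<Sum>C\<in>?SC. (X + 2) ^ ?m - X ^ ?m)"
    by (rule sum_mono) (use fiber_approx[OF d H] in \<open>auto simp: X_def\<close>)
  also have "\<dots> = real (singc TYPE('n) d) * ((X + 2) ^ ?m - X ^ ?m)"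
    by (simp add: singc_def)
  finally show ?thesis .
qed


definition Zeta :: "real \<Rightarrow> real" where "Zeta \<delta> = suminf (\<lambda>k::nat. real k powr (-1-\<delta>))"

lemma summable_Zeta: "\<delta> > 0 \<Longrightarrow> summable (\<lambda>k::nat. real k powr (-1-\<delta>))"
  by (subst summable_real_powr_iff) auto

lemma sum_powr_le_Zeta:
  assumes "finite P" "\<delta> > 0"
  shows "(\<Sum>p\<in>P. real p powr (-1-\<delta>)) \<le> Zeta \<delta>"
  unfolding Zeta_def by (rule sum_le_suminf[OF summable_Zeta[OF assms(2)] assms(1)]) auto

lemma Zeta_nonneg: "\<delta> > 0 \<Longrightarrow> Zeta \<delta> \<ge> 0"
  unfolding Zeta_def by (rule suminf_nonneg[OF summable_Zeta]) auto

lemma sum_Pow_prod: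
  fixes a :: "nat \<Rightarrow> real"
  assumes "finite P"
  shows "(\<Sum>S\<in>Pow P. \<Prod>p\<in>S. a p) = (\<Prod>p\<in>P. 1 + a p)"
  using prod_add[OF assms, of a "\<lambda>_. 1"] by (simp add: add.commute)

lemma prod_one_plus_le_exp:
  fixes a :: "nat \<Rightarrow> real"
  assumes "\<And>p. p \<in> P \<Longrightarrow> a p \<ge> 0"
  shows "(\<Prod>p\<in>P. 1 + a p) \<le> exp (\<Sum>p\<in>P. a p)"
proof (cases "finite P")
  case True
  have "(\<Prod>p\<in>P. 1 + a p) \<le> (\<Prod>p\<in>P. exp (a p))"
    by (rule prod_mono) (use assms in auto)
  then show ?thesis using True by (simp add: exp_sum)
qed simp

lemma Pow_exp_bound:
  fixes c \<delta> :: real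
  assumes P: "finite P" "\<And>p. p \<in> P \<Longrightarrow> prime p" and c: "c \<ge> 0" and \<delta>: "\<delta> > 0"
  shows "(\<Sum>S\<in>Pow P. \<Prod>p\<in>S. c * real p powr (-1-\<delta>)) \<le> exp (c * Zeta \<delta>)"
proof -
  have "(\<Sum>S\<in>Pow P. \<Prod>p\<in>S. c * real p powr (-1-\<delta>)) = (\<Prod>p\<in>P. 1 + c * real p powr (-1-\<delta>))"
    by (rule sum_Pow_prod[OF P(1)])
  also have "\<dots> \<le> exp (\<Sum>p\<in>P. c * real p powr (-1-\<delta>))"
    by (rule prod_one_plus_le_exp) (use c in auto)
  also have "\<dots> \<le> exp (c * Zeta \<delta>)"
    using sum_powr_le_Zeta[OF P(1) \<delta>] c by (simp add: sum_distrib_left[symmetric] mult_left_mono)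
  finally show ?thesis .
qed

lemma prod_powr_nat:
  assumes "finite S" "\<And>p. p \<in> S \<Longrightarrow> prime p"
  shows "real (\<Prod>S) powr r = (\<Prod>p\<in>S. real p powr r)"
  by (simp add: prod_powr_distrib)

lemma prod_pos_primes: "(\<And>p. p \<in> S \<Longrightarrow> prime p) \<Longrightarrow> \<Prod>S > (0::nat)"
  by (metis not_prime_0 prod_pos gr0I)

lemma rankin_small:
  fixes c \<delta> D :: real
  assumes P: "finite P" "\<And>p. p \<in> P \<Longrightarrow> prime p" and c: "c \<ge> 0" and \<delta>: "\<delta> > 0" and D: "D > 0"
  shows "(\<Sum>S\<in>{S. S \<subseteq> P \<and> real (\<Prod>S) \<le> D}. c ^ card S / real (\<Prod>S)) \<le> D powr \<delta> * exp (c * Zeta \<delta>)"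
proof -
  have fin: "finite {S. S \<subseteq> P \<and> real (\<Prod>S) \<le> D}" using P(1) by (rule finite_subset[rotated, OF finite_Pow_iff[THEN iffD2]]) auto
  have "(\<Sum>S\<in>{S. S \<subseteq> P \<and> real (\<Prod>S) \<le> D}. c ^ card S / real (\<Prod>S))
      \<le> (\<Sum>S\<in>{S. S \<subseteq> P \<and> real (\<Prod>S) \<le> D}. D powr \<delta> * (\<Prod>p\<in>S. c * real p powr (-1-\<delta>)))"
  proof (rule sum_mono)
    fix S assume S: "S \<in> {S. S \<subseteq> P \<and> real (\<Prod>S) \<le> D}"
    then have SP: "S \<subseteq> P" and SD: "real (\<Prod>S) \<le> D" by auto
    have finS: "finite S" using SP P(1) finite_subset by blast
    have pr: "\<And>p. p \<in> S \<Longrightarrow> prime p" using SP P(2) by auto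
    have "\<Prod>S > 0" using prod_pos_primes[of S] pr by blast
    then have pos: "real (\<Prod>S) > 0" by (simp only: of_nat_0_less_iff)
    have "(\<Prod>p\<in>S. c * real p powr (-1-\<delta>)) = c ^ card S * (\<Prod>p\<in>S. real p powr (-1-\<delta>))"
      by (simp add: prod.distrib finS)
    also have "(\<Prod>p\<in>S. real p powr (-1-\<delta>)) = real (\<Prod>S) powr (-1-\<delta>)"
      by (rule prod_powr_nat[OF finS pr, symmetric])
    also have "real (\<Prod>S) powr (-1-\<delta>) = real (\<Prod>S) powr (-\<delta>) / real (\<Prod>S)"
      using pos by (simp add: powr_diff powr_minus divide_simps powr_add[symmetric])
    finally have e: "(\<Prod>p\<in>S. c * real p powr (-1-\<delta>)) = c ^ card S * (real (\<Prod>S) powr (-\<delta>) / real (\<Prod>S))" .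
    have "D powr \<delta> * real (\<Prod>S) powr (-\<delta>) \<ge> 1"
    proof -
      define x where "x = real (\<Prod>S)"
      have x0: "x > 0" using pos by (simp add: x_def)
      have "x powr \<delta> \<le> D powr \<delta>" using SD pos \<delta> by (intro powr_mono2) (auto simp: x_def)
      moreover have "x powr (-\<delta>) = 1 / x powr \<delta>" using x0 by (simp add: powr_minus divide_simps)
      moreover have "x powr \<delta> > 0" using x0 by simp
      ultimately have "D powr \<delta> * x powr (-\<delta>) \<ge> 1" by (simp add: le_divide_eq_1)
      then show ?thesis by (simp add: x_def)
    qed
    moreover have nn: "c ^ card S / real (\<Prod>S) \<ge> 0" using c pos by simp
    ultimately have "c ^ card S / real (\<Prod>S) \<le> (D powr \<delta> * real (\<Prod>S) powr (-\<delta>)) * (c ^ card S / real (\<Prod>S))"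
      using mult_right_mono by fastforce
    also have "\<dots> = D powr \<delta> * (\<Prod>p\<in>S. c * real p powr (-1-\<delta>))" by (simp add: e)
    finally show "c ^ card S / real (\<Prod>S) \<le> D powr \<delta> * (\<Prod>p\<in>S. c * real p powr (-1-\<delta>))" .
  qed
  also have "\<dots> \<le> (\<Sum>S\<in>Pow P. D powr \<delta> * (\<Prod>p\<in>S. c * real p powr (-1-\<delta>)))"
    by (rule sum_mono2) (use P c in \<open>auto intro!: prod_nonneg mult_nonneg_nonneg\<close>)
  also have "\<dots> = D powr \<delta> * (\<Sum>S\<in>Pow P. \<Prod>p\<in>S. c * real p powr (-1-\<delta>))"
    by (simp add: sum_distrib_left)
  also have "\<dots> \<le> D powr \<delta> * exp (c * Zeta \<delta>)"
    by (rule mult_left_mono, rule Pow_exp_bound) (use P c \<delta> in auto)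
  finally show ?thesis .
qed

lemma rankin_tail:
  fixes c \<delta> D :: real
  assumes P: "finite P" "\<And>p. p \<in> P \<Longrightarrow> prime p" and c: "c \<ge> 0" and \<delta>: "\<delta> > 0" "\<delta> < 1" and D: "D > 0"
  shows "(\<Sum>S\<in>{S. S \<subseteq> P \<and> real (\<Prod>S) > D}. \<Prod>p\<in>S. c / real p ^ 2) \<le> D powr (\<delta> - 1) * exp (c * Zeta \<delta>)"
proof -
  have fin: "finite {S. S \<subseteq> P \<and> real (\<Prod>S) > D}" using P(1) by (rule finite_subset[rotated, OF finite_Pow_iff[THEN iffD2]]) auto
  have "(\<Sum>S\<in>{S. S \<subseteq> P \<and> real (\<Prod>S) > D}. \<Prod>p\<in>S. c / real p ^ 2)
      \<le> (\<Sum>S\<in>{S. S \<subseteq> P \<and> real (\<Prod>S) > D}. D powr (\<delta> - 1) * (\<Prod>p\<in>S. c * real p powr (-1-\<delta>)))"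
  proof (rule sum_mono)
    fix S assume S: "S \<in> {S. S \<subseteq> P \<and> real (\<Prod>S) > D}"
    then have SP: "S \<subseteq> P" and SD: "real (\<Prod>S) > D" by auto
    have finS: "finite S" using SP P(1) finite_subset by blast
    have pr: "\<And>p. p \<in> S \<Longrightarrow> prime p" using SP P(2) by auto
    have "\<Prod>S > 0" using prod_pos_primes[of S] pr by blast
    then have pos: "real (\<Prod>S) > 0" by (simp only: of_nat_0_less_iff)
    have "(\<Prod>p\<in>S. c * real p powr (-1-\<delta>)) = c ^ card S * (\<Prod>p\<in>S. real p powr (-1-\<delta>))"
      by (simp add: prod.distrib finS)
    also have "(\<Prod>p\<in>S. real p powr (-1-\<delta>)) = real (\<Prod>S) powr (-1-\<delta>)"
      by (rule prod_powr_nat[OF finS pr, symmetric])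
    finally have e: "(\<Prod>p\<in>S. c * real p powr (-1-\<delta>)) = c ^ card S * real (\<Prod>S) powr (-1-\<delta>)" .
    have e2: "(\<Prod>p\<in>S. c / real p ^ 2) = c ^ card S * real (\<Prod>S) powr (-2)"
    proof -
      have "(\<Prod>p\<in>S. c / real p ^ 2) = (\<Prod>p\<in>S. c * real p powr (-2))"
      proof (rule prod.cong[OF refl])
        fix p assume "p \<in> S"
        then have "real p > 0" using pr prime_gt_0_nat by force
        then show "c / real p ^ 2 = c * real p powr (-2)"
          by (simp add: powr_minus divide_simps powr_realpow)
      qed
      also have "\<dots> = c ^ card S * (\<Prod>p\<in>S. real p powr (-2))" by (simp add: prod.distrib finS)
      also have "(\<Prod>p\<in>S. real p powr (-2)) = real (\<Prod>S) powr (-2)"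
        by (rule prod_powr_nat[OF finS pr, symmetric])
      finally show ?thesis .
    qed
    have "D powr (\<delta> - 1) * real (\<Prod>S) powr (-1-\<delta>) \<ge> real (\<Prod>S) powr (-2)"
    proof -
      have "real (\<Prod>S) powr (1 - \<delta>) \<ge> D powr (1 - \<delta>)" using SD D \<delta> by (intro powr_mono2) auto
      then have "D powr (\<delta> - 1) * real (\<Prod>S) powr (1 - \<delta>) \<ge> D powr (\<delta> - 1) * D powr (1 - \<delta>)"
        by (intro mult_left_mono) auto
      also have "D powr (\<delta> - 1) * D powr (1 - \<delta>) = 1" using D by (simp add: powr_add[symmetric])
      finally have "D powr (\<delta> - 1) * real (\<Prod>S) powr (1 - \<delta>) \<ge> 1" .
      then have "D powr (\<delta> - 1) * real (\<Prod>S) powr (1 - \<delta>) * real (\<Prod>S) powr (-2) \<ge> real (\<Prod>S) powr (-2)"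
        using mult_right_mono[of 1 _ "real (\<Prod>S) powr (-2)"] by fastforce
      moreover have "real (\<Prod>S) powr (1 - \<delta>) * real (\<Prod>S) powr (-2) = real (\<Prod>S) powr (-1-\<delta>)"
        using pos by (simp add: powr_add[symmetric])
      ultimately show ?thesis by (simp add: mult.assoc)
    qed
    then have "c ^ card S * real (\<Prod>S) powr (-2) \<le> c ^ card S * (D powr (\<delta> - 1) * real (\<Prod>S) powr (-1-\<delta>))"
      using c by (intro mult_left_mono) auto
    then show "(\<Prod>p\<in>S. c / real p ^ 2) \<le> D powr (\<delta> - 1) * (\<Prod>p\<in>S. c * real p powr (-1-\<delta>))"
      by (simp add: e e2 algebra_simps)
  qed
  also have "\<dots> \<le> (\<Sum>S\<in>Pow P. D powr (\<delta> - 1) * (\<Prod>p\<in>S. c * real p powr (-1-\<delta>)))"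
    by (rule sum_mono2) (use P c in \<open>auto intro!: prod_nonneg mult_nonneg_nonneg\<close>)
  also have "\<dots> = D powr (\<delta> - 1) * (\<Sum>S\<in>Pow P. \<Prod>p\<in>S. c * real p powr (-1-\<delta>))"
    by (simp add: sum_distrib_left)
  also have "\<dots> \<le> D powr (\<delta> - 1) * exp (c * Zeta \<delta>)"
    by (rule mult_left_mono, rule Pow_exp_bound) (use P c \<delta> in auto)
  finally show ?thesis .
qed


definition Bd :: "real \<Rightarrow> nat" where "Bd \<delta> = nat \<lceil>2 powr (1/\<delta>)\<rceil>"

lemma two_pow_card_bound:
  assumes P: "finite P" "\<And>p. p \<in> P \<Longrightarrow> prime p" and \<delta>: "\<delta> > 0"
  shows "2 ^ card P \<le> 2 ^ Bd \<delta> * real (\<Prod>P) powr \<delta>"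
proof -
  define P1 where "P1 = {p \<in> P. real p < 2 powr (1/\<delta>)}"
  define P2 where "P2 = {p \<in> P. \<not> real p < 2 powr (1/\<delta>)}"
  have fin: "finite P1" "finite P2" using P(1) by (auto simp: P1_def P2_def)
  have PU: "P = P1 \<union> P2" "P1 \<inter> P2 = {}" by (auto simp: P1_def P2_def)
  have "P1 \<subseteq> {..<Bd \<delta>}"
  proof
    fix p assume "p \<in> P1"
    then have "real p < 2 powr (1/\<delta>)" by (simp add: P1_def)
    also have "\<dots> \<le> real_of_int \<lceil>2 powr (1/\<delta>)\<rceil>" by linarith
    finally have "real p < real_of_int \<lceil>2 powr (1/\<delta>)\<rceil>" .
    then have "int p < \<lceil>2 powr (1/\<delta>)\<rceil>" by linarith
    then show "p \<in> {..<Bd \<delta>}" unfolding Bd_def by simp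
  qed
  then have c1: "card P1 \<le> Bd \<delta>" using card_mono[of "{..<Bd \<delta>}" P1] by simp
  have ge1: "real p powr \<delta> \<ge> 1" if "p \<in> P" for p
  proof -
    have "real p \<ge> 1" using P(2)[OF that] prime_ge_1_nat by simp
    then show ?thesis using \<delta> by (simp add: ge_one_powr_ge_zero)
  qed
  have "(2::real) ^ card P2 = (\<Prod>p\<in>P2. 2)" by simp
  also have "\<dots> \<le> (\<Prod>p\<in>P2. real p powr \<delta>)"
  proof (rule prod_mono)
    fix p assume p: "p \<in> P2"
    then have "2 powr (1/\<delta>) \<le> real p" by (simp add: P2_def)
    then have "(2 powr (1/\<delta>)) powr \<delta> \<le> real p powr \<delta>" using \<delta> by (intro powr_mono2) auto
    then show "0 \<le> (2::real) \<and> 2 \<le> real p powr \<delta>" using \<delta> by (simp add: powr_powr)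
  qed
  finally have e2: "(2::real) ^ card P2 \<le> (\<Prod>p\<in>P2. real p powr \<delta>)" .
  have e1: "(\<Prod>p\<in>P1. real p powr \<delta>) \<ge> 1"
    by (rule prod_ge_1) (use ge1 in \<open>auto simp: P1_def\<close>)
  have "(2::real) ^ card P = 2 ^ card P1 * 2 ^ card P2"
    using PU fin by (simp add: card_Un_disjoint power_add)
  also have "\<dots> \<le> 2 ^ Bd \<delta> * (1 * (\<Prod>p\<in>P2. real p powr \<delta>))"
    using c1 e2 by (intro mult_mono power_increasing) auto
  also have "\<dots> \<le> 2 ^ Bd \<delta> * ((\<Prod>p\<in>P1. real p powr \<delta>) * (\<Prod>p\<in>P2. real p powr \<delta>))"
    using e1 by (intro mult_left_mono mult_right_mono) (auto intro: prod_nonneg)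
  also have "(\<Prod>p\<in>P1. real p powr \<delta>) * (\<Prod>p\<in>P2. real p powr \<delta>) = (\<Prod>p\<in>P. real p powr \<delta>)"
    using PU fin by (simp add: prod.union_disjoint)
  also have "\<dots> = real (\<Prod>P) powr \<delta>" by (rule prod_powr_nat[OF P, symmetric])
  finally show ?thesis .
qed

lemma prod_primes_dvd:
  fixes k :: nat
  assumes "finite S" "\<And>p. p \<in> S \<Longrightarrow> prime p \<and> p dvd k"
  shows "\<Prod>S dvd k"
  using assms
proof (induction S rule: finite_induct)
  case empty then show ?case by simp
next
  case (insert p S)
  have cop: "coprime p (\<Prod>S)"
    using insert by (intro prod_coprime_right) (metis insertCI primes_coprime)
  have "p dvd k" "\<Prod>S dvd k" using insert by auto
  then show ?case using insert cop by (simp add: divides_mult)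
qed

lemma totient_expand:
  assumes k: "k > 0"
  shows "real (totient k) / real k = (\<Sum>S\<in>Pow (prime_factors k). \<Prod>p\<in>S. - 1 / real p)"
proof -
  have "real (totient k) / real k = (\<Prod>p\<in>prime_factors k. 1 - 1 / real p)"
    using k by (simp add: totient_formula2)
  also have "\<dots> = (\<Prod>p\<in>prime_factors k. 1 + (- 1 / real p))" by simp
  also have "\<dots> = (\<Sum>S\<in>Pow (prime_factors k). \<Prod>p\<in>S. - 1 / real p)"
    by (rule sum_Pow_prod[symmetric]) simp
  finally show ?thesis .
qed


definition rho :: "'n::finite itself \<Rightarrow> nat \<Rightarrow> real" where
  "rho T d = real (singc T d) / real d ^ (CARD('n) * CARD('n))"

lemma singc_p_real:
  assumes p: "prime p"
  shows "real (singc TYPE('n::finite) p) = real p ^ (CARD('n)*CARD('n)) - (\<Prod>i<CARD('n). (real p ^ CARD('n) - real p ^ i))"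
proof -
  have le: "(\<Prod>i<CARD('n). (p ^ CARD('n) - p ^ i)) \<le> p ^ (CARD('n)*CARD('n))"
  proof -
    have "(\<Prod>i<CARD('n). (p ^ CARD('n) - p ^ i)) \<le> (\<Prod>i<CARD('n). p ^ CARD('n))"
      by (rule prod_mono) auto
    also have "\<dots> = p ^ (CARD('n)*CARD('n))" by (simp add: power_mult[symmetric] mult.commute)
    finally show ?thesis .
  qed
  have pp: "p ^ i \<le> p ^ CARD('n)" if "i < CARD('n)" for i
    using p that prime_ge_1_nat[OF p] by (intro power_increasing) auto
  have "real (singc TYPE('n::finite) p) = real (p ^ (CARD('n)*CARD('n)) - (\<Prod>i<CARD('n). (p ^ CARD('n) - p ^ i)))"
    unfolding singc_def using card_sing_p[OF p, where 'n='n] by simp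
  also have "\<dots> = real p ^ (CARD('n)*CARD('n)) - (\<Prod>i<CARD('n). (real p ^ CARD('n) - real p ^ i))"
    using le pp by (simp add: of_nat_diff of_nat_prod)
  finally show ?thesis .
qed

lemma rho_p:
  assumes p: "prime p"
  shows "rho TYPE('n::finite) p = 1 - (\<Prod>i<CARD('n). (1 - 1 / real p ^ (CARD('n) - i)))"
proof -
  let ?n = "CARD('n)"
  have p0: "real p > 0" using p prime_gt_0_nat by simp
  have "(\<Prod>i<?n. (real p ^ ?n - real p ^ i)) / real p ^ (?n * ?n) = (\<Prod>i<?n. (real p ^ ?n - real p ^ i) / real p ^ ?n)"
    by (simp add: prod_dividef power_mult[symmetric] mult.commute)
  also have "\<dots> = (\<Prod>i<?n. (1 - 1 / real p ^ (?n - i)))"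
  proof (rule prod.cong[OF refl])
    fix i assume i: "i \<in> {..<?n}"
    have "real p ^ ?n = real p ^ i * real p ^ (?n - i)" using i by (simp add: power_add[symmetric])
    then show "(real p ^ ?n - real p ^ i) / real p ^ ?n = 1 - 1 / real p ^ (?n - i)"
      using p0 by (simp add: divide_simps algebra_simps)
  qed
  finally have e: "(\<Prod>i<?n. (real p ^ ?n - real p ^ i)) / real p ^ (?n * ?n) = (\<Prod>i<?n. (1 - 1 / real p ^ (?n - i)))" .
  show ?thesis unfolding rho_def singc_p_real[OF p] using p0
    by (simp add: diff_divide_distrib e)
qed

lemma prod_rev_index:
  fixes f :: "nat \<Rightarrow> real"
  shows "(\<Prod>i<n. f (n - i)) = (\<Prod>j\<in>{1..n}. f j)"
proof (rule prod.reindex_bij_witness[where i = "\<lambda>j. n - j" and j = "\<lambda>i. n - i"])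
qed auto

lemma sigma_factor_rho:
  assumes p: "prime p"
  shows "sigma_factor CARD('n::finite) p = 1 - rho TYPE('n) p / real p"
proof -
  let ?n = "CARD('n)"
  have n1: "?n \<ge> 1" by (simp add: Suc_le_eq)
  have p0: "real p > 0" using p prime_gt_0_nat by simp
  have "(\<Prod>i<?n. (1 - 1 / real p ^ (?n - i))) = (\<Prod>j\<in>{1..?n}. (1 - 1 / real p ^ j))"
    by (rule prod_rev_index)
  also have "{1..?n} = insert 1 {2..?n}" using n1 by auto
  also have "(\<Prod>j\<in>insert 1 {2..?n}. (1 - 1 / real p ^ j)) = (1 - 1 / real p) * (\<Prod>j\<in>{2..?n}. (1 - 1 / real p ^ j))"
    by simp
  finally have e: "(\<Prod>i<?n. (1 - 1 / real p ^ (?n - i))) = (1 - 1 / real p) * (\<Prod>j\<in>{2..?n}. (1 - 1 / real p ^ j))" .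
  show ?thesis unfolding sigma_factor_def rho_p[OF p] e
    using p0 by (simp add: field_simps)
qed

lemma one_minus_prod_le_sum:
  fixes x :: "nat \<Rightarrow> real"
  assumes "finite I" "\<And>i. i \<in> I \<Longrightarrow> 0 \<le> x i \<and> x i \<le> 1"
  shows "1 - (\<Prod>i\<in>I. 1 - x i) \<le> (\<Sum>i\<in>I. x i)"
  using assms
proof (induction I rule: finite_induct)
  case empty then show ?case by simp
next
  case (insert j I)
  have h: "0 \<le> x j" "x j \<le> 1" using insert by auto
  have P0: "0 \<le> (\<Prod>i\<in>I. 1 - x i)" "(\<Prod>i\<in>I. 1 - x i) \<le> 1"
    using insert by (auto intro!: prod_nonneg prod_le_1)
  have "1 - (\<Prod>i\<in>insert j I. 1 - x i) = 1 - (1 - x j) * (\<Prod>i\<in>I. 1 - x i)" using insert by simp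
  also have "\<dots> = (1 - (\<Prod>i\<in>I. 1 - x i)) + x j * (\<Prod>i\<in>I. 1 - x i)" by (simp add: algebra_simps)
  also have "\<dots> \<le> (\<Sum>i\<in>I. x i) + x j"
    using insert h P0 by (intro add_mono) (auto intro: mult_left_le)
  finally show ?case using insert by simp
qed

lemma rho_p_bounds:
  assumes p: "prime p"
  shows "0 \<le> rho TYPE('n::finite) p" "rho TYPE('n) p \<le> real CARD('n) / real p"
proof -
  show "0 \<le> rho TYPE('n::finite) p" by (simp add: rho_def)
  let ?n = "CARD('n)"
  have p1: "real p \<ge> 1" using p prime_ge_1_nat by simp
  have x: "0 \<le> 1 / real p ^ (?n - i) \<and> 1 / real p ^ (?n - i) \<le> 1 / real p" if "i < ?n" for i
  proof -
    have "real p ^ 1 \<le> real p ^ (?n - i)" using that p1 by (intro power_increasing) auto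
    then show ?thesis using p1 by (simp add: frac_le)
  qed
  have "rho TYPE('n) p \<le> (\<Sum>i<?n. 1 / real p ^ (?n - i))"
    unfolding rho_p[OF p]
    by (rule one_minus_prod_le_sum) (use x p1 in \<open>auto simp: divide_le_eq_1\<close>)
  also have "\<dots> \<le> (\<Sum>i<?n. 1 / real p)" by (rule sum_mono) (use x in auto)
  also have "\<dots> = real ?n / real p" by simp
  finally show "rho TYPE('n) p \<le> real CARD('n) / real p" .
qed

lemma rho_prod:
  assumes "finite S" "\<And>p. p \<in> S \<Longrightarrow> prime p"
  shows "rho TYPE('n::finite) (\<Prod>S) = (\<Prod>p\<in>S. rho TYPE('n) p)"
proof -
  have "singc TYPE('n) (\<Prod>S) = (\<Prod>p\<in>S. singc TYPE('n) p)" by (rule singc_prod) (use assms in auto)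
  then show ?thesis unfolding rho_def by (simp add: prod_dividef prod_power_distrib)
qed


definition PR :: "nat \<Rightarrow> nat set" where "PR N = {p. prime p \<and> p \<le> N}"
definition uS :: "'n::finite itself \<Rightarrow> nat set \<Rightarrow> real" where "uS T S = (\<Prod>p\<in>S. - rho T p / real p)"
definition fam :: "nat \<Rightarrow> nat set set" where "fam D = {S. S \<subseteq> PR D \<and> \<Prod>S \<le> D}"
definition gD :: "'n::finite itself \<Rightarrow> nat \<Rightarrow> real" where "gD T D = (\<Sum>S\<in>fam D. uS T S)"
definition KT :: "nat \<Rightarrow> real \<Rightarrow> real" where "KT n \<delta> = exp (real n * Zeta \<delta>)"

lemma finite_PR: "finite (PR N)" unfolding PR_def by auto
lemma prime_PR: "p \<in> PR N \<Longrightarrow> prime p" unfolding PR_def by auto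
lemma finite_fam: "finite (fam D)" unfolding fam_def
  by (rule finite_subset[of _ "Pow (PR D)"]) (auto simp: finite_PR)

lemma euler_partial:
  "(\<Prod>p\<in>PR N. sigma_factor CARD('n::finite) p) = (\<Sum>S\<in>Pow (PR N). uS TYPE('n) S)"
proof -
  have "(\<Prod>p\<in>PR N. sigma_factor CARD('n::finite) p) = (\<Prod>p\<in>PR N. 1 + (- rho TYPE('n) p / real p))"
    by (intro prod.cong refl) (simp add: sigma_factor_rho prime_PR)
  also have "\<dots> = (\<Sum>S\<in>Pow (PR N). uS TYPE('n) S)"
    unfolding uS_def by (rule sum_Pow_prod[symmetric, OF finite_PR])
  finally show ?thesis .
qed

lemma mem_le_prod_primes:
  fixes S :: "nat set"
  assumes "finite S" "\<And>p. p \<in> S \<Longrightarrow> prime p" "q \<in> S"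
  shows "q \<le> \<Prod>S"
proof -
  have "q dvd \<Prod>S" using dvd_prodI[of S q "\<lambda>x. x"] assms by simp
  moreover have "\<Prod>S > 0" using prod_pos_primes[of S] assms by blast
  ultimately show ?thesis by (simp add: dvd_imp_le)
qed

lemma fam_eq:
  assumes "D \<le> N"
  shows "fam D = {S. S \<subseteq> PR N \<and> real (\<Prod>S) \<le> real D}"
proof -
  have "S \<subseteq> PR D" if "S \<subseteq> PR N" "\<Prod>S \<le> D" for S
  proof
    fix q assume q: "q \<in> S"
    have finS: "finite S" using that finite_PR finite_subset by blast
    have "q \<le> \<Prod>S" by (rule mem_le_prod_primes[OF finS _ q]) (use that prime_PR in auto)
    then show "q \<in> PR D" using that q by (auto simp: PR_def)
  qed
  moreover have "PR D \<subseteq> PR N" using assms by (auto simp: PR_def)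
  ultimately show ?thesis unfolding fam_def of_nat_le_iff by auto
qed

lemma uS_abs:
  assumes "finite S" "\<And>p. p \<in> S \<Longrightarrow> prime p"
  shows "\<bar>uS TYPE('n::finite) S\<bar> \<le> (\<Prod>p\<in>S. real CARD('n) / real p ^ 2)"
  unfolding uS_def abs_prod
proof (rule prod_mono)
  fix p assume p: "p \<in> S"
  have pr: "prime p" using assms p by auto
  have p0: "real p > 0" using pr prime_gt_0_nat by simp
  have "\<bar>- rho TYPE('n) p / real p\<bar> = rho TYPE('n) p / real p" using rho_p_bounds[OF pr, where 'n='n] p0 by simp
  also have "\<dots> \<le> (real CARD('n) / real p) / real p"
    using rho_p_bounds[OF pr, where 'n='n] p0 by (intro divide_right_mono) auto
  finally show "0 \<le> \<bar>- rho TYPE('n) p / real p\<bar> \<and> \<bar>- rho TYPE('n) p / real p\<bar> \<le> real CARD('n) / real p ^ 2"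
    by (simp add: power2_eq_square)
qed

lemma partial_vs_g:
  assumes DN: "D \<le> N" and D: "D \<ge> 1" and \<delta>: "\<delta> > 0" "\<delta> < 1"
  shows "\<bar>(\<Prod>p\<in>PR N. sigma_factor CARD('n::finite) p) - gD TYPE('n) D\<bar> \<le> real D powr (\<delta> - 1) * KT CARD('n) \<delta>"
proof -
  let ?T = "{S. S \<subseteq> PR N \<and> real (\<Prod>S) > real D}"
  have PU: "Pow (PR N) = fam D \<union> ?T" "fam D \<inter> ?T = {}" using fam_eq[OF DN] by auto
  have finT: "finite ?T" by (rule finite_subset[of _ "Pow (PR N)"]) (auto simp: finite_PR)
  have "(\<Prod>p\<in>PR N. sigma_factor CARD('n::finite) p) = gD TYPE('n) D + (\<Sum>S\<in>?T. uS TYPE('n) S)"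
    unfolding euler_partial gD_def PU(1) using PU(2) finT finite_fam by (simp add: sum.union_disjoint)
  then have "\<bar>(\<Prod>p\<in>PR N. sigma_factor CARD('n::finite) p) - gD TYPE('n) D\<bar> = \<bar>\<Sum>S\<in>?T. uS TYPE('n) S\<bar>" by simp
  also have "\<dots> \<le> (\<Sum>S\<in>?T. \<bar>uS TYPE('n) S\<bar>)" by (rule sum_abs)
  also have "\<dots> \<le> (\<Sum>S\<in>?T. \<Prod>p\<in>S. real CARD('n) / real p ^ 2)"
  proof (rule sum_mono)
    fix S assume "S \<in> ?T"
    then have "S \<subseteq> PR N" by auto
    then show "\<bar>uS TYPE('n) S\<bar> \<le> (\<Prod>p\<in>S. real CARD('n) / real p ^ 2)"
      by (intro uS_abs) (auto intro: finite_subset[OF _ finite_PR] prime_PR)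
  qed
  also have "\<dots> \<le> real D powr (\<delta> - 1) * exp (real CARD('n) * Zeta \<delta>)"
    by (rule rankin_tail) (use D \<delta> finite_PR prime_PR in auto)
  finally show ?thesis by (simp add: KT_def)
qed

lemma sigma_conv:
  "(\<lambda>N. \<Prod>p\<in>PR N. sigma_factor CARD('n::finite) p) \<longlonglongrightarrow> sigma_const CARD('n)"
proof -
  let ?a = "\<lambda>N. \<Prod>p\<in>PR N. sigma_factor CARD('n::finite) p"
  define K where "K = KT CARD('n) (1/2)"
  have K0: "K > 0" by (simp add: K_def KT_def)
  have "Cauchy ?a"
  proof (rule CauchyI)
    fix e :: real assume e: "e > 0"
    define D where "D = nat \<lceil>(2 * K / e) ^ 2\<rceil> + 1"
    have D1: "D \<ge> 1" by (simp add: D_def)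
    have "real D > (2 * K / e) ^ 2" unfolding D_def by linarith
    then have "sqrt (real D) > 2 * K / e" using K0 e by (metis real_less_rsqrt)
    then have "2 * K < e * sqrt (real D)" using e by (simp add: divide_less_eq mult.commute)
    then have lt: "2 * K / sqrt (real D) < e" using D1 by (simp add: divide_less_eq)
    have pw: "real D powr (1/2 - 1) = 1 / sqrt (real D)"
      using D1 by (simp add: powr_minus_divide powr_half_sqrt[symmetric] powr_diff)
    show "\<exists>M. \<forall>m\<ge>M. \<forall>n\<ge>M. norm (?a m - ?a n) < e"
    proof (intro exI allI impI)
      fix m n assume m: "D \<le> m" and n: "D \<le> n"
      have b1: "\<bar>?a m - gD TYPE('n) D\<bar> \<le> real D powr (1/2 - 1) * K"
        unfolding K_def by (rule partial_vs_g) (use m D1 in auto)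
      have b2: "\<bar>?a n - gD TYPE('n) D\<bar> \<le> real D powr (1/2 - 1) * K"
        unfolding K_def by (rule partial_vs_g) (use n D1 in auto)
      have "norm (?a m - ?a n) \<le> \<bar>?a m - gD TYPE('n) D\<bar> + \<bar>?a n - gD TYPE('n) D\<bar>" by simp
      also have "\<dots> \<le> 2 * K / sqrt (real D)" using b1 b2 pw by simp
      finally show "norm (?a m - ?a n) < e" using lt by simp
    qed
  qed
  then have "convergent ?a" by (simp add: Cauchy_convergent_iff)
  then show ?thesis unfolding sigma_const_def by (simp add: convergent_LIMSEQ_iff PR_def)
qed

lemma g_vs_sigma:
  assumes D: "D \<ge> 1" and \<delta>: "\<delta> > 0" "\<delta> < 1"
  shows "\<bar>sigma_const CARD('n::finite) - gD TYPE('n) D\<bar> \<le> real D powr (\<delta> - 1) * KT CARD('n) \<delta>"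
proof -
  have "(\<lambda>N. \<bar>(\<Prod>p\<in>PR N. sigma_factor CARD('n::finite) p) - gD TYPE('n) D\<bar>) \<longlonglongrightarrow> \<bar>sigma_const CARD('n) - gD TYPE('n) D\<bar>"
    by (intro tendsto_intros sigma_conv)
  then show ?thesis
    by (rule Lim_bounded[where M = D]) (use partial_vs_g D \<delta> in auto)
qed


definition wS :: "nat set \<Rightarrow> real" where "wS S = (\<Prod>p\<in>S. - 1 / real p)"

lemma abs_wS: "finite S \<Longrightarrow> \<bar>wS S\<bar> = 1 / real (\<Prod>S)"
  by (simp add: wS_def abs_prod prod_dividef)

lemma famdvd:
  assumes k: "k > 0"
  shows "{S \<in> Pow (prime_factors k). \<Prod>S \<le> D} = {S \<in> fam D. \<Prod>S dvd k}"
proof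
  show "{S \<in> Pow (prime_factors k). \<Prod>S \<le> D} \<subseteq> {S \<in> fam D. \<Prod>S dvd k}"
  proof
    fix S assume S: "S \<in> {S \<in> Pow (prime_factors k). \<Prod>S \<le> D}"
    then have Sk: "S \<subseteq> prime_factors k" and SD: "\<Prod>S \<le> D" by auto
    have finS: "finite S" using Sk finite_subset by blast
    have pr: "\<And>p. p \<in> S \<Longrightarrow> prime p" using Sk by (auto simp: prime_factors_dvd k)
    have "S \<subseteq> PR D"
    proof
      fix q assume q: "q \<in> S"
      have "q \<le> \<Prod>S" by (rule mem_le_prod_primes[OF finS _ q]) (use pr in auto)
      then show "q \<in> PR D" using SD pr q by (auto simp: PR_def)
    qed
    moreover have "\<Prod>S dvd k"
      by (rule prod_primes_dvd[OF finS]) (use Sk k in \<open>auto simp: prime_factors_dvd\<close>)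
    ultimately show "S \<in> {S \<in> fam D. \<Prod>S dvd k}" using SD by (auto simp: fam_def)
  qed
  show "{S \<in> fam D. \<Prod>S dvd k} \<subseteq> {S \<in> Pow (prime_factors k). \<Prod>S \<le> D}"
  proof
    fix S assume S: "S \<in> {S \<in> fam D. \<Prod>S dvd k}"
    then have SP: "S \<subseteq> PR D" and SD: "\<Prod>S \<le> D" and dv: "\<Prod>S dvd k" by (auto simp: fam_def)
    have finS: "finite S" using SP finite_PR finite_subset by blast
    have "S \<subseteq> prime_factors k"
    proof
      fix q assume q: "q \<in> S"
      have "q dvd \<Prod>S" using dvd_prodI[of S q "\<lambda>x. x"] finS q by simp
      then have "q dvd k" using dv by (rule dvd_trans)
      then show "q \<in> prime_factors k" using q SP k by (auto simp: prime_factors_dvd PR_def)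
    qed
    then show "S \<in> {S \<in> Pow (prime_factors k). \<Prod>S \<le> D}" using SD by auto
  qed
qed

lemma per_matrix:
  assumes k: "k > 0" and D: "D \<ge> 1"
  shows "\<bar>real (totient k) / real k - (\<Sum>S\<in>fam D. if \<Prod>S dvd k then wS S else 0)\<bar> \<le> 2 ^ card (prime_factors k) / real D"
proof -
  let ?P = "Pow (prime_factors k)"
  let ?A1 = "{S \<in> ?P. \<Prod>S \<le> D}"
  let ?A2 = "{S \<in> ?P. \<not> \<Prod>S \<le> D}"
  have finP: "finite ?P" by simp
  have "real (totient k) / real k = (\<Sum>S\<in>?P. wS S)" unfolding wS_def by (rule totient_expand[OF k])
  also have "?P = ?A1 \<union> ?A2" by auto
  also have "(\<Sum>S\<in>?A1 \<union> ?A2. wS S) = (\<Sum>S\<in>?A1. wS S) + (\<Sum>S\<in>?A2. wS S)"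
    by (rule sum.union_disjoint) auto
  also have "(\<Sum>S\<in>?A1. wS S) = (\<Sum>S\<in>fam D. if \<Prod>S dvd k then wS S else 0)"
    unfolding famdvd[OF k] by (rule sum.inter_filter[OF finite_fam])
  finally have e: "real (totient k) / real k - (\<Sum>S\<in>fam D. if \<Prod>S dvd k then wS S else 0) = (\<Sum>S\<in>?A2. wS S)" by simp
  have "\<bar>\<Sum>S\<in>?A2. wS S\<bar> \<le> (\<Sum>S\<in>?A2. \<bar>wS S\<bar>)" by (rule sum_abs)
  also have "\<dots> \<le> (\<Sum>S\<in>?A2. 1 / real D)"
  proof (rule sum_mono)
    fix S assume S: "S \<in> ?A2"
    then have fin: "finite S" using finite_subset by auto
    have "D \<le> \<Prod>S" using S by auto
    then have "real D \<le> real (\<Prod>S)" by (simp only: of_nat_le_iff)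
    then show "\<bar>wS S\<bar> \<le> 1 / real D" using D by (simp add: abs_wS[OF fin] frac_le)
  qed
  also have "\<dots> = real (card ?A2) / real D" by simp
  also have "\<dots> \<le> real (card ?P) / real D"
    using D by (intro divide_right_mono) (auto intro!: card_mono)
  also have "\<dots> = 2 ^ card (prime_factors k) / real D" by (simp add: card_Pow)
  finally show ?thesis using e by simp
qed


lemma int_dvd_det_iff: "int d dvd x \<longleftrightarrow> d dvd nat \<bar>x\<bar>"
proof -
  have "int d dvd x \<longleftrightarrow> int d dvd \<bar>x\<bar>" by simp
  also have "\<bar>x\<bar> = int (nat \<bar>x\<bar>)" by simp
  also have "int d dvd int (nat \<bar>x\<bar>) \<longleftrightarrow> d dvd nat \<bar>x\<bar>" by (rule of_nat_dvd_iff)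
  finally show ?thesis .
qed

lemma Phi_split:
  fixes H :: int
  assumes D: "D \<ge> 1"
  defines "NS \<equiv> {A :: int^'n::finite^'n. A \<in> int_matrices_bounded H \<and> det A \<noteq> 0}"
  shows "\<bar>Phi TYPE('n) H - (\<Sum>S\<in>fam D. wS S * real (card {A \<in> NS. int (\<Prod>S) dvd det A}))\<bar>
     \<le> (\<Sum>A\<in>NS. 2 ^ card (prime_factors (nat \<bar>det A\<bar>)) / real D)"
proof -
  have finNS: "finite NS" unfolding NS_def by (rule finite_subset[OF _ finite_box[of H]]) auto
  have "(\<Sum>S\<in>fam D. wS S * real (card {A \<in> NS. int (\<Prod>S) dvd det A}))
      = (\<Sum>S\<in>fam D. \<Sum>A\<in>NS. if \<Prod>S dvd nat \<bar>det A\<bar> then wS S else 0)"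
  proof (rule sum.cong[OF refl])
    fix S
    have "(\<Sum>A\<in>NS. if \<Prod>S dvd nat \<bar>det A\<bar> then wS S else 0) = (\<Sum>A\<in>{A \<in> NS. \<Prod>S dvd nat \<bar>det A\<bar>}. wS S)"
      by (rule sum.inter_filter[OF finNS, symmetric])
    also have "\<dots> = wS S * real (card {A \<in> NS. int (\<Prod>S) dvd det A})"
      by (simp add: int_dvd_det_iff)
    finally show "wS S * real (card {A \<in> NS. int (\<Prod>S) dvd det A}) = (\<Sum>A\<in>NS. if \<Prod>S dvd nat \<bar>det A\<bar> then wS S else 0)" by simp
  qed
  also have "\<dots> = (\<Sum>A\<in>NS. \<Sum>S\<in>fam D. if \<Prod>S dvd nat \<bar>det A\<bar> then wS S else 0)"
    by (rule sum.swap)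
  finally have e: "(\<Sum>S\<in>fam D. wS S * real (card {A \<in> NS. int (\<Prod>S) dvd det A}))
      = (\<Sum>A\<in>NS. \<Sum>S\<in>fam D. if \<Prod>S dvd nat \<bar>det A\<bar> then wS S else 0)" .
  have P: "Phi TYPE('n) H = (\<Sum>A\<in>NS. real (totient (nat \<bar>det A\<bar>)) / real (nat \<bar>det A\<bar>))"
    unfolding Phi_def NS_def by (intro sum.cong refl) simp
  have "\<bar>Phi TYPE('n) H - (\<Sum>S\<in>fam D. wS S * real (card {A \<in> NS. int (\<Prod>S) dvd det A}))\<bar>
     = \<bar>\<Sum>A\<in>NS. real (totient (nat \<bar>det A\<bar>)) / real (nat \<bar>det A\<bar>) - (\<Sum>S\<in>fam D. if \<Prod>S dvd nat \<bar>det A\<bar> then wS S else 0)\<bar>"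
    unfolding P e by (simp add: sum_subtractf)
  also have "\<dots> \<le> (\<Sum>A\<in>NS. \<bar>real (totient (nat \<bar>det A\<bar>)) / real (nat \<bar>det A\<bar>) - (\<Sum>S\<in>fam D. if \<Prod>S dvd nat \<bar>det A\<bar> then wS S else 0)\<bar>)"
    by (rule sum_abs)
  also have "\<dots> \<le> (\<Sum>A\<in>NS. 2 ^ card (prime_factors (nat \<bar>det A\<bar>)) / real D)"
  proof (rule sum_mono)
    fix A assume "A \<in> NS"
    then have "nat \<bar>det A\<bar> > 0" by (simp add: NS_def)
    then show "\<bar>real (totient (nat \<bar>det A\<bar>)) / real (nat \<bar>det A\<bar>) - (\<Sum>S\<in>fam D. if \<Prod>S dvd nat \<bar>det A\<bar> then wS S else 0)\<bar>
        \<le> 2 ^ card (prime_factors (nat \<bar>det A\<bar>)) / real D"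
      by (rule per_matrix[OF _ D])
  qed
  finally show ?thesis .
qed


lemma rho_fam_bound:
  assumes S: "S \<in> fam D"
  shows "rho TYPE('n::finite) (\<Prod>S) \<le> real CARD('n) ^ card S / real (\<Prod>S)"
proof -
  have SP: "S \<subseteq> PR D" using S by (auto simp: fam_def)
  have finS: "finite S" using SP finite_PR finite_subset by blast
  have pr: "\<And>p. p \<in> S \<Longrightarrow> prime p" using SP prime_PR by auto
  have "rho TYPE('n) (\<Prod>S) = (\<Prod>p\<in>S. rho TYPE('n) p)" by (rule rho_prod) (use finS pr in auto)
  also have "\<dots> \<le> (\<Prod>p\<in>S. real CARD('n) / real p)"
    by (rule prod_mono) (use pr rho_p_bounds in auto)
  also have "\<dots> = real CARD('n) ^ card S / real (\<Prod>S)" by (simp add: prod_dividef)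
  finally show ?thesis .
qed

lemma err_S:
  fixes H :: int
  assumes H: "H \<ge> 1" and S: "S \<in> fam (nat H)"
  shows "\<bar>real (card {A \<in> int_matrices_bounded H :: (int^'n::finite^'n) set. int (\<Prod>S) dvd det A})
          - rho TYPE('n) (\<Prod>S) * real_of_int (2*H+1) ^ (CARD('n)*CARD('n))\<bar>
       \<le> 2 * real (CARD('n)*CARD('n)) * real CARD('n) ^ card S * (5 * real_of_int H) ^ (CARD('n)*CARD('n) - 1)"
proof -
  let ?m = "CARD('n)*CARD('n)"
  let ?d = "\<Prod>S"
  have SP: "S \<subseteq> PR (nat H)" and SD: "?d \<le> nat H" using S by (auto simp: fam_def)
  have finS: "finite S" using SP finite_PR finite_subset by blast
  have pr: "\<And>p. p \<in> S \<Longrightarrow> prime p" using SP prime_PR by auto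
  have d0: "?d > 0" using prod_pos_primes[of S] pr by blast
  have dr0: "real ?d > 0" using d0 by (simp only: of_nat_0_less_iff)
  have "real ?d \<le> real (nat H)" using SD by (simp only: of_nat_le_iff)
  then have dH: "real ?d \<le> real_of_int H" using H by simp
  define X where "X = real_of_int (2*H+1) / real ?d"
  have X0: "X \<ge> 0" unfolding X_def using H dr0 by (intro divide_nonneg_pos) auto
  have sX: "real (singc TYPE('n) ?d) * X ^ ?m = rho TYPE('n) ?d * real_of_int (2*H+1) ^ ?m"
    using dr0 by (simp add: rho_def X_def power_divide)
  have "\<bar>real (card {A \<in> int_matrices_bounded H :: (int^'n::finite^'n) set. int ?d dvd det A})
          - rho TYPE('n) ?d * real_of_int (2*H+1) ^ ?m\<bar> \<le> real (singc TYPE('n) ?d) * ((X + 2) ^ ?m - X ^ ?m)"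
    using equidist[OF d0, of H, where 'n='n] H unfolding sX[symmetric] X_def by simp
  also have "\<dots> \<le> real (singc TYPE('n) ?d) * (2 * real ?m * (X + 2) ^ (?m - 1))"
    by (rule mult_left_mono[OF pow_diff_bound[OF X0]]) simp
  also have "real (singc TYPE('n) ?d) = rho TYPE('n) ?d * real ?d ^ ?m"
    using dr0 by (simp add: rho_def)
  also have "rho TYPE('n) ?d * real ?d ^ ?m * (2 * real ?m * (X + 2) ^ (?m - 1))
      \<le> (real CARD('n) ^ card S / real ?d) * real ?d ^ ?m * (2 * real ?m * (X + 2) ^ (?m - 1))"
    using rho_fam_bound[OF S, where 'n='n] X0 dr0 by (intro mult_right_mono) auto
  also have "(real CARD('n) ^ card S / real ?d) * real ?d ^ ?m * (2 * real ?m * (X + 2) ^ (?m - 1))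
      = 2 * real ?m * real CARD('n) ^ card S * (real ?d * (X + 2)) ^ (?m - 1)"
  proof -
    have m1: "?m \<ge> 1" by (simp add: Suc_le_eq)
    define c where "c = real CARD('n) ^ card S"
    define Y where "Y = X + 2"
    define k where "k = ?m - 1"
    have dm: "real ?d ^ ?m = real ?d * real ?d ^ k" using m1 unfolding k_def by (simp add: power_eq_if)
    have "(c / real ?d) * real ?d ^ ?m * (2 * real ?m * Y ^ k) = (c / real ?d * real ?d) * (2 * real ?m) * (real ?d ^ k * Y ^ k)"
      unfolding dm by (simp only: mult_ac)
    also have "c / real ?d * real ?d = c" using dr0 by simp
    also have "real ?d ^ k * Y ^ k = (real ?d * Y) ^ k" by (simp add: power_mult_distrib)
    finally show ?thesis unfolding c_def Y_def k_def by (simp only: mult_ac)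
  qed
  also have "real ?d * (X + 2) = real_of_int (2*H+1) + 2 * real ?d" using dr0 by (simp add: X_def field_simps)
  also have "2 * real ?m * real CARD('n) ^ card S * (real_of_int (2*H+1) + 2 * real ?d) ^ (?m - 1)
     \<le> 2 * real ?m * real CARD('n) ^ card S * (5 * real_of_int H) ^ (?m - 1)"
  proof -
    have Hr: "real_of_int H \<ge> 1" using H by simp
    have "real_of_int (2*H+1) + 2 * real ?d \<le> 5 * real_of_int H" using dH Hr by simp
    moreover have "0 \<le> real_of_int (2*H+1) + 2 * real ?d" using dr0 H by simp
    ultimately show ?thesis by (intro mult_left_mono power_mono) auto
  qed
  finally show ?thesis .
qed


lemma fam_rankin:
  assumes D: "D \<ge> 1" and c: "c \<ge> 0" and \<delta>: "\<delta> > 0"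
  shows "(\<Sum>S\<in>fam D. c ^ card S / real (\<Prod>S)) \<le> real D powr \<delta> * exp (c * Zeta \<delta>)"
  unfolding fam_eq[OF order_refl]
  by (rule rankin_small) (use D c \<delta> finite_PR prime_PR in auto)

lemma tail_pow_bound:
  fixes A :: "int^'n::finite^'n"
  assumes A: "A \<in> int_matrices_bounded H" "det A \<noteq> 0" and \<delta>: "\<delta> > 0" and H: "H \<ge> 1"
  shows "2 ^ card (prime_factors (nat \<bar>det A\<bar>)) \<le> 2 ^ Bd \<delta> * (fact CARD('n) * real_of_int H ^ CARD('n)) powr \<delta>"
proof -
  let ?k = "nat \<bar>det A\<bar>"
  have k0: "?k > 0" using A by simp
  have finP: "finite (prime_factors ?k)" by simp
  have prP: "\<And>p. p \<in> prime_factors ?k \<Longrightarrow> prime p" by auto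
  have t1: "2 ^ card (prime_factors ?k) \<le> 2 ^ Bd \<delta> * real (\<Prod>(prime_factors ?k)) powr \<delta>"
    by (rule two_pow_card_bound) (use \<delta> in auto)
  have "real (\<Prod>(prime_factors ?k)) \<le> real ?k"
  proof -
    have "\<Prod>(prime_factors ?k) dvd ?k"
      by (rule prod_primes_dvd[OF finP]) (use k0 in \<open>auto simp: prime_factors_dvd\<close>)
    then have "\<Prod>(prime_factors ?k) \<le> ?k" using k0 by (rule dvd_imp_le)
    then show ?thesis by (simp only: of_nat_le_iff)
  qed
  moreover have "0 \<le> real (\<Prod>(prime_factors ?k))" by (rule of_nat_0_le_iff)
  ultimately have t2: "real (\<Prod>(prime_factors ?k)) powr \<delta> \<le> real ?k powr \<delta>"
    using \<delta> by (intro powr_mono2) auto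
  have "real ?k \<le> fact CARD('n) * real_of_int H ^ CARD('n)"
  proof -
    have "\<bar>det A\<bar> \<le> fact CARD('n) * H ^ CARD('n)"
      by (rule det_abs_bound) (use A in \<open>auto simp: int_matrices_bounded_def\<close>)
    then have "real_of_int \<bar>det A\<bar> \<le> real_of_int (fact CARD('n) * H ^ CARD('n))" by (simp only: of_int_le_iff)
    then show ?thesis by simp
  qed
  then have t3: "real ?k powr \<delta> \<le> (fact CARD('n) * real_of_int H ^ CARD('n)) powr \<delta>"
    using \<delta> by (intro powr_mono2) auto
  show ?thesis using t1 order_trans[OF t2 t3] by (smt (verit) mult_left_mono zero_le_power)
qed

lemma wS_rho:
  assumes "S \<in> fam D"
  shows "wS S * rho TYPE('n::finite) (\<Prod>S) = uS TYPE('n) S"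
proof -
  have SP: "S \<subseteq> PR D" using assms by (auto simp: fam_def)
  have finS: "finite S" using SP finite_PR finite_subset by blast
  have pr: "\<And>p. p \<in> S \<Longrightarrow> prime p" using SP prime_PR by auto
  have "rho TYPE('n) (\<Prod>S) = (\<Prod>p\<in>S. rho TYPE('n) p)" by (rule rho_prod) (use finS pr in auto)
  then show ?thesis unfolding wS_def uS_def by (simp add: prod.distrib[symmetric])
qed

lemma card_NS_dvd:
  "real (card {A \<in> {A :: int^'n::finite^'n. A \<in> int_matrices_bounded H \<and> det A \<noteq> 0}. int d dvd det A})
    = real (card {A \<in> int_matrices_bounded H :: (int^'n^'n) set. int d dvd det A}) - real (card {A \<in> int_matrices_bounded H :: (int^'n^'n) set. det A = 0})"
proof -
  let ?B = "int_matrices_bounded H :: (int^'n^'n) set"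
  have u: "{A \<in> ?B. int d dvd det A} = {A \<in> {A. A \<in> ?B \<and> det A \<noteq> 0}. int d dvd det A} \<union> {A \<in> ?B. det A = 0}" by auto
  have "card {A \<in> ?B. int d dvd det A} = card {A \<in> {A. A \<in> ?B \<and> det A \<noteq> 0}. int d dvd det A} + card {A \<in> ?B. det A = 0}"
    unfolding u by (rule card_Un_disjoint) (auto intro: finite_subset[OF _ finite_box[of H]])
  then show ?thesis by simp
qed

lemma main_decomp:
  fixes H :: int
  assumes H: "H \<ge> 1" and \<delta>: "\<delta> > 0" "\<delta> < 1"
  shows "\<bar>Phi TYPE('n::finite) H - real_of_int (2*H+1) ^ (CARD('n)*CARD('n)) * gD TYPE('n) (nat H)\<bar>
    \<le> 2 * real (CARD('n)*CARD('n)) * (5 * real_of_int H) ^ (CARD('n)*CARD('n) - 1) * (real_of_int H powr \<delta> * KT CARD('n) \<delta>)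
      + real CARD('n) * real_of_int (2*H+1) ^ (CARD('n)*CARD('n) - 1) * (real_of_int H powr \<delta> * KT 1 \<delta>)
      + real_of_int (2*H+1) ^ (CARD('n)*CARD('n)) * (2 ^ Bd \<delta> * (fact CARD('n) * real_of_int H ^ CARD('n)) powr \<delta>) / real_of_int H"
proof -
  let ?m = "CARD('n)*CARD('n)"
  let ?h = "real_of_int H"
  let ?Hb = "real_of_int (2*H+1) ^ ?m"
  let ?B = "int_matrices_bounded H :: (int^'n^'n) set"
  let ?NS = "{A :: int^'n::finite^'n. A \<in> int_matrices_bounded H \<and> det A \<noteq> 0}"
  define D where "D = nat H"
  have D1: "D \<ge> 1" using H by (simp add: D_def)
  have hD: "real D = ?h" using H by (simp add: D_def)
  have h1: "?h \<ge> 1" using H by simp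
  define Nd where "Nd = (\<lambda>d. real (card {A \<in> ?B. int d dvd det A}))"
  define Zc where "Zc = real (card {A \<in> ?B. det A = 0})"
  have Zb: "Zc \<le> real CARD('n) * real_of_int (2*H+1) ^ (?m - 1)"
  proof -
    have "card {A \<in> ?B. det A = 0} \<le> CARD('n) * nat (2*H+1) ^ (?m - 1)" using Z_bound[of H] H by simp
    then have "real (card {A \<in> ?B. det A = 0}) \<le> real (CARD('n) * nat (2*H+1) ^ (?m - 1))" by (simp only: of_nat_le_iff)
    then show ?thesis using H by (simp add: Zc_def)
  qed
  define T where "T = (\<Sum>S\<in>fam D. wS S * real (card {A \<in> ?NS. int (\<Prod>S) dvd det A}))"
  have s1: "\<bar>Phi TYPE('n) H - T\<bar> \<le> (\<Sum>A\<in>?NS. 2 ^ card (prime_factors (nat \<bar>det A\<bar>)) / real D)"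
    unfolding T_def by (rule Phi_split[OF D1])
  also have "\<dots> \<le> (\<Sum>A\<in>?NS. (2 ^ Bd \<delta> * (fact CARD('n) * ?h ^ CARD('n)) powr \<delta>) / ?h)"
    unfolding hD by (rule sum_mono, rule divide_right_mono) (use tail_pow_bound \<delta> H in auto)
  also have "\<dots> = real (card ?NS) * ((2 ^ Bd \<delta> * (fact CARD('n) * ?h ^ CARD('n)) powr \<delta>) / ?h)" by simp
  also have "\<dots> \<le> ?Hb * ((2 ^ Bd \<delta> * (fact CARD('n) * ?h ^ CARD('n)) powr \<delta>) / ?h)"
  proof (rule mult_right_mono)
    have "card ?NS \<le> card ?B" by (rule card_mono[OF finite_box]) auto
    then have "real (card ?NS) \<le> real (card ?B)" by (simp only: of_nat_le_iff)
    moreover have "real (card ?B) = ?Hb" using card_box[of H, where 'n='n] H by simp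
    ultimately show "real (card ?NS) \<le> ?Hb" by linarith
  qed (use h1 in auto)
  finally have b1: "\<bar>Phi TYPE('n) H - T\<bar> \<le> ?Hb * (2 ^ Bd \<delta> * (fact CARD('n) * ?h ^ CARD('n)) powr \<delta>) / ?h" by simp
  have "T = (\<Sum>S\<in>fam D. wS S * (Nd (\<Prod>S) - Zc))"
    unfolding T_def Nd_def Zc_def card_NS_dvd ..
  also have "\<dots> = ?Hb * (\<Sum>S\<in>fam D. wS S * rho TYPE('n) (\<Prod>S)) + (\<Sum>S\<in>fam D. wS S * (Nd (\<Prod>S) - rho TYPE('n) (\<Prod>S) * ?Hb)) - Zc * (\<Sum>S\<in>fam D. wS S)"
    by (simp add: algebra_simps sum.distrib sum_distrib_left sum_distrib_right sum_subtractf)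
  also have "(\<Sum>S\<in>fam D. wS S * rho TYPE('n) (\<Prod>S)) = gD TYPE('n) D"
    unfolding gD_def by (rule sum.cong[OF refl]) (rule wS_rho)
  finally have Te: "T - ?Hb * gD TYPE('n) D = (\<Sum>S\<in>fam D. wS S * (Nd (\<Prod>S) - rho TYPE('n) (\<Prod>S) * ?Hb)) - Zc * (\<Sum>S\<in>fam D. wS S)"
    by simp
  have finfam: "\<And>S. S \<in> fam D \<Longrightarrow> finite S" using finite_PR finite_subset by (auto simp: fam_def)
  have b2: "\<bar>\<Sum>S\<in>fam D. wS S * (Nd (\<Prod>S) - rho TYPE('n) (\<Prod>S) * ?Hb)\<bar>
      \<le> 2 * real ?m * (5 * ?h) ^ (?m - 1) * (?h powr \<delta> * KT CARD('n) \<delta>)"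
  proof -
    have "\<bar>\<Sum>S\<in>fam D. wS S * (Nd (\<Prod>S) - rho TYPE('n) (\<Prod>S) * ?Hb)\<bar>
       \<le> (\<Sum>S\<in>fam D. \<bar>wS S\<bar> * \<bar>Nd (\<Prod>S) - rho TYPE('n) (\<Prod>S) * ?Hb\<bar>)"
      by (rule order_trans[OF sum_abs]) (simp add: abs_mult)
    also have "\<dots> \<le> (\<Sum>S\<in>fam D. (1 / real (\<Prod>S)) * (2 * real ?m * real CARD('n) ^ card S * (5 * ?h) ^ (?m - 1)))"
    proof (rule sum_mono)
      fix S assume S: "S \<in> fam D"
      show "\<bar>wS S\<bar> * \<bar>Nd (\<Prod>S) - rho TYPE('n) (\<Prod>S) * ?Hb\<bar> \<le> (1 / real (\<Prod>S)) * (2 * real ?m * real CARD('n) ^ card S * (5 * ?h) ^ (?m - 1))"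
        unfolding abs_wS[OF finfam[OF S]] Nd_def
        by (rule mult_left_mono) (use err_S[OF H, of S, where 'n='n] S D_def in \<open>auto intro: prod_nonneg\<close>)
    qed
    also have "\<dots> = 2 * real ?m * (5 * ?h) ^ (?m - 1) * (\<Sum>S\<in>fam D. real CARD('n) ^ card S / real (\<Prod>S))"
      by (simp add: sum_distrib_left algebra_simps)
    also have "\<dots> \<le> 2 * real ?m * (5 * ?h) ^ (?m - 1) * (real D powr \<delta> * exp (real CARD('n) * Zeta \<delta>))"
      by (rule mult_left_mono[OF fam_rankin[OF D1 _ \<delta>(1)]]) (use h1 in auto)
    finally show ?thesis by (simp add: hD KT_def)
  qed
  have b3: "\<bar>Zc * (\<Sum>S\<in>fam D. wS S)\<bar> \<le> real CARD('n) * real_of_int (2*H+1) ^ (?m - 1) * (?h powr \<delta> * KT 1 \<delta>)"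
  proof -
    have Z0: "Zc \<ge> 0" by (simp add: Zc_def)
    have "\<bar>\<Sum>S\<in>fam D. wS S\<bar> \<le> (\<Sum>S\<in>fam D. \<bar>wS S\<bar>)" by (rule sum_abs)
    also have "\<dots> = (\<Sum>S\<in>fam D. 1 ^ card S / real (\<Prod>S))" by (intro sum.cong refl) (simp add: abs_wS finfam)
    also have "\<dots> \<le> real D powr \<delta> * exp (1 * Zeta \<delta>)" by (rule fam_rankin[OF D1 _ \<delta>(1)]) simp
    finally have "\<bar>\<Sum>S\<in>fam D. wS S\<bar> \<le> ?h powr \<delta> * KT 1 \<delta>" by (simp add: hD KT_def)
    then have "\<bar>Zc * (\<Sum>S\<in>fam D. wS S)\<bar> \<le> Zc * (?h powr \<delta> * KT 1 \<delta>)"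
      using Z0 by (simp add: abs_mult mult_left_mono)
    also have "\<dots> \<le> real CARD('n) * real_of_int (2*H+1) ^ (?m - 1) * (?h powr \<delta> * KT 1 \<delta>)"
      using Zb by (intro mult_right_mono) (auto simp: KT_def)
    finally show ?thesis .
  qed
  have "\<bar>Phi TYPE('n) H - ?Hb * gD TYPE('n) D\<bar> \<le> \<bar>Phi TYPE('n) H - T\<bar> + \<bar>T - ?Hb * gD TYPE('n) D\<bar>" by simp
  also have "\<bar>T - ?Hb * gD TYPE('n) D\<bar> \<le> \<bar>\<Sum>S\<in>fam D. wS S * (Nd (\<Prod>S) - rho TYPE('n) (\<Prod>S) * ?Hb)\<bar> + \<bar>Zc * (\<Sum>S\<in>fam D. wS S)\<bar>"
    unfolding Te by simp
  finally show ?thesis using b1 b2 b3 unfolding D_def by simp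
qed


lemma pow_diff_one:
  fixes h :: real assumes h: "h \<ge> 1"
  shows "(2*h+1) ^ m - (2*h) ^ m \<le> 2 * real m * (2*h+1) ^ (m - 1)"
proof -
  have "(2*h) ^ m \<ge> (2*h - 1) ^ m" using h by (intro power_mono) auto
  moreover have "((2*h-1) + 2) ^ m - (2*h-1) ^ m \<le> 2 * real m * ((2*h-1) + 2) ^ (m - 1)"
    by (rule pow_diff_bound) (use h in auto)
  ultimately show ?thesis by (simp add: algebra_simps)
qed

lemma hpow_powr:
  fixes h :: real assumes h: "h \<ge> 1" and k: "k \<ge> 1"
  shows "h ^ (k - 1) = h powr (real k - 1)"
  using h k by (simp add: powr_realpow[symmetric] of_nat_diff)

lemma powr_le_E:
  fixes h :: real assumes "h \<ge> 1" "a \<le> E"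
  shows "h powr a \<le> h powr E"
  using assms by (intro powr_mono) auto

lemma final_bound:
  fixes H :: int
  assumes H: "H \<ge> 1" and \<delta>: "\<delta> > 0" "\<delta> < 1"
  defines "m \<equiv> CARD('n::finite)*CARD('n)" and "n \<equiv> CARD('n)"
  defines "E \<equiv> real m - 1 + real n * \<delta>"
  defines "C \<equiv> 2 * real m * 5 ^ (m - 1) * KT n \<delta> + real n * 3 ^ (m - 1) * KT 1 \<delta>
             + 3 ^ m * 2 ^ Bd \<delta> * fact n powr \<delta> + 3 ^ m * KT n \<delta> + \<bar>sigma_const n\<bar> * 2 * real m * 3 ^ (m - 1)"
  shows "\<bar>Phi TYPE('n) H - 2 ^ m * sigma_const n * real_of_int H ^ m\<bar> \<le> C * real_of_int H powr E"
proof -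
  define h where "h = real_of_int H"
  have h1: "h \<ge> 1" using H by (simp add: h_def)
  have h0: "h > 0" using h1 by simp
  have n1: "n \<ge> 1" by (simp add: n_def Suc_le_eq)
  have m1: "m \<ge> 1" using n1 by (simp add: m_def)
  define g where "g = gD TYPE('n) (nat H)"
  define \<sigma> where "\<sigma> = sigma_const n"
  have Hb: "real_of_int (2*H+1) = 2*h+1" by (simp add: h_def)
  have hD: "real (nat H) = h" using H by (simp add: h_def)
  have mdec: "\<bar>Phi TYPE('n) H - (2*h+1) ^ m * g\<bar>
    \<le> 2 * real m * (5 * h) ^ (m - 1) * (h powr \<delta> * KT n \<delta>)
      + real n * (2*h+1) ^ (m - 1) * (h powr \<delta> * KT 1 \<delta>)
      + (2*h+1) ^ m * (2 ^ Bd \<delta> * (fact n * h ^ n) powr \<delta>) / h"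
    using main_decomp[OF H \<delta>, where 'n='n] unfolding m_def n_def g_def h_def by simp
  have gs: "\<bar>\<sigma> - g\<bar> \<le> h powr (\<delta> - 1) * KT n \<delta>"
    using g_vs_sigma[of "nat H" \<delta>, where 'n='n] H \<delta> unfolding \<sigma>_def g_def n_def hD by simp
  have pd: "(2*h+1) ^ m - (2*h) ^ m \<le> 2 * real m * (2*h+1) ^ (m - 1)" by (rule pow_diff_one[OF h1])
  have pd0: "(2*h+1) ^ m - (2*h) ^ m \<ge> 0" using h0 by (intro diff_ge_0_iff_ge[THEN iffD2] power_mono) auto
  have tri: "\<bar>Phi TYPE('n) H - 2 ^ m * \<sigma> * h ^ m\<bar> \<le> \<bar>Phi TYPE('n) H - (2*h+1) ^ m * g\<bar> + (2*h+1) ^ m * \<bar>\<sigma> - g\<bar> + \<bar>\<sigma>\<bar> * ((2*h+1) ^ m - (2*h) ^ m)"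
  proof -
    have "Phi TYPE('n) H - 2 ^ m * \<sigma> * h ^ m = (Phi TYPE('n) H - (2*h+1) ^ m * g) - (2*h+1) ^ m * (\<sigma> - g) + \<sigma> * ((2*h+1) ^ m - (2*h) ^ m)"
      by (simp add: algebra_simps power_mult_distrib)
    then have "\<bar>Phi TYPE('n) H - 2 ^ m * \<sigma> * h ^ m\<bar> \<le> \<bar>Phi TYPE('n) H - (2*h+1) ^ m * g\<bar> + \<bar>(2*h+1) ^ m * (\<sigma> - g)\<bar> + \<bar>\<sigma> * ((2*h+1) ^ m - (2*h) ^ m)\<bar>"
      by linarith
    also have "\<bar>(2*h+1) ^ m * (\<sigma> - g)\<bar> = (2*h+1) ^ m * \<bar>\<sigma> - g\<bar>" using h0 by (simp add: abs_mult)
    also have "\<bar>\<sigma> * ((2*h+1) ^ m - (2*h) ^ m)\<bar> = \<bar>\<sigma>\<bar> * ((2*h+1) ^ m - (2*h) ^ m)" using pd0 by (simp add: abs_mult)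
    finally show ?thesis .
  qed
  have p3: "(2*h+1) ^ k \<le> 3 ^ k * h ^ k" for k
  proof -
    have "(2*h+1) ^ k \<le> (3*h) ^ k" using h1 by (intro power_mono) auto
    then show ?thesis by (simp add: power_mult_distrib)
  qed
  have hm1: "h ^ (m - 1) = h powr (real m - 1)" using hpow_powr[OF h1 m1] .
  have hm: "h ^ m = h * h powr (real m - 1)"
    using m1 hm1 by (metis power_eq_if not_one_le_zero)
  have Ea: "real m - 1 + \<delta> \<le> E" using n1 \<delta> by (simp add: E_def)
  have Eb: "real m - 1 \<le> E" using \<delta> by (simp add: E_def)
  have q1: "h ^ (m - 1) * h powr \<delta> \<le> h powr E"
    unfolding hm1 by (simp add: powr_add[symmetric] powr_le_E[OF h1 Ea])
  have q2: "h ^ (m - 1) \<le> h powr E" unfolding hm1 by (rule powr_le_E[OF h1 Eb])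
  have q3: "h ^ m * (fact n * h ^ n) powr \<delta> / h = fact n powr \<delta> * h powr E"
  proof -
    have "(fact n * h ^ n) powr \<delta> = fact n powr \<delta> * (h ^ n) powr \<delta>" using h0 by (simp add: powr_mult)
    also have "(h ^ n) powr \<delta> = h powr (real n * \<delta>)" using h0 by (simp add: powr_powr powr_realpow[symmetric])
    finally have "(fact n * h ^ n) powr \<delta> = fact n powr \<delta> * h powr (real n * \<delta>)" .
    moreover have "h powr (real m - 1) * h powr (real n * \<delta>) = h powr (real m - 1 + real n * \<delta>)"
      by (simp add: powr_add)
    ultimately show ?thesis unfolding hm E_def using h0 by (simp add: field_simps)
  qed
  have q4: "h ^ m * h powr (\<delta> - 1) \<le> h powr E"
  proof -
    have "h ^ m * h powr (\<delta> - 1) = h powr (real m - 1 + \<delta>)"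
      unfolding hm using h0 by (simp add: powr_add[symmetric] powr_diff field_simps)
    then show ?thesis using powr_le_E[OF h1 Ea] by simp
  qed
  have K1: "KT n \<delta> \<ge> 0" "KT 1 \<delta> \<ge> 0" by (auto simp: KT_def)
  have t1: "2 * real m * (5 * h) ^ (m - 1) * (h powr \<delta> * KT n \<delta>) \<le> 2 * real m * 5 ^ (m - 1) * KT n \<delta> * h powr E"
  proof -
    have "2 * real m * (5 * h) ^ (m - 1) * (h powr \<delta> * KT n \<delta>) = 2 * real m * 5 ^ (m - 1) * KT n \<delta> * (h ^ (m - 1) * h powr \<delta>)"
      by (simp add: power_mult_distrib mult_ac)
    also have "\<dots> \<le> 2 * real m * 5 ^ (m - 1) * KT n \<delta> * h powr E" using q1 K1 by (intro mult_left_mono) auto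
    finally show ?thesis .
  qed
  have t2: "real n * (2*h+1) ^ (m - 1) * (h powr \<delta> * KT 1 \<delta>) \<le> real n * 3 ^ (m - 1) * KT 1 \<delta> * h powr E"
  proof -
    have "real n * (2*h+1) ^ (m - 1) * (h powr \<delta> * KT 1 \<delta>) \<le> real n * (3 ^ (m - 1) * h ^ (m - 1)) * (h powr \<delta> * KT 1 \<delta>)"
      using p3 K1 by (intro mult_right_mono mult_left_mono) auto
    also have "\<dots> = real n * 3 ^ (m - 1) * KT 1 \<delta> * (h ^ (m - 1) * h powr \<delta>)" by (simp add: mult_ac)
    also have "\<dots> \<le> real n * 3 ^ (m - 1) * KT 1 \<delta> * h powr E" using q1 K1 by (intro mult_left_mono) auto
    finally show ?thesis .
  qed
  have t3: "(2*h+1) ^ m * (2 ^ Bd \<delta> * (fact n * h ^ n) powr \<delta>) / h \<le> 3 ^ m * 2 ^ Bd \<delta> * fact n powr \<delta> * h powr E"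
  proof -
    have "(2*h+1) ^ m * (2 ^ Bd \<delta> * (fact n * h ^ n) powr \<delta>) / h \<le> (3 ^ m * h ^ m) * (2 ^ Bd \<delta> * (fact n * h ^ n) powr \<delta>) / h"
      using p3 h0 by (intro divide_right_mono mult_right_mono) auto
    also have "\<dots> = 3 ^ m * 2 ^ Bd \<delta> * (h ^ m * (fact n * h ^ n) powr \<delta> / h)" by (simp add: mult_ac)
    also have "\<dots> = 3 ^ m * 2 ^ Bd \<delta> * fact n powr \<delta> * h powr E" unfolding q3 by (simp add: mult_ac)
    finally show ?thesis .
  qed
  have t4: "(2*h+1) ^ m * \<bar>\<sigma> - g\<bar> \<le> 3 ^ m * KT n \<delta> * h powr E"
  proof -
    have "(2*h+1) ^ m * \<bar>\<sigma> - g\<bar> \<le> (3 ^ m * h ^ m) * (h powr (\<delta> - 1) * KT n \<delta>)"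
      using p3 gs h0 by (intro mult_mono) auto
    also have "\<dots> = 3 ^ m * KT n \<delta> * (h ^ m * h powr (\<delta> - 1))" by (simp add: mult_ac)
    also have "\<dots> \<le> 3 ^ m * KT n \<delta> * h powr E" using q4 K1 by (intro mult_left_mono) auto
    finally show ?thesis .
  qed
  have t5: "\<bar>\<sigma>\<bar> * ((2*h+1) ^ m - (2*h) ^ m) \<le> \<bar>\<sigma>\<bar> * 2 * real m * 3 ^ (m - 1) * h powr E"
  proof -
    have "\<bar>\<sigma>\<bar> * ((2*h+1) ^ m - (2*h) ^ m) \<le> \<bar>\<sigma>\<bar> * (2 * real m * (3 ^ (m - 1) * h ^ (m - 1)))"
    proof (rule mult_left_mono)
      have "2 * real m * (2*h+1) ^ (m - 1) \<le> 2 * real m * (3 ^ (m - 1) * h ^ (m - 1))"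
        using p3[of "m - 1"] by (intro mult_left_mono) auto
      then show "(2*h+1) ^ m - (2*h) ^ m \<le> 2 * real m * (3 ^ (m - 1) * h ^ (m - 1))" using pd by linarith
    qed simp
    also have "\<dots> = \<bar>\<sigma>\<bar> * 2 * real m * 3 ^ (m - 1) * h ^ (m - 1)" by (simp add: mult_ac)
    also have "\<dots> \<le> \<bar>\<sigma>\<bar> * 2 * real m * 3 ^ (m - 1) * h powr E" using q2 by (intro mult_left_mono) auto
    finally show ?thesis .
  qed
  have "\<bar>Phi TYPE('n) H - 2 ^ m * \<sigma> * h ^ m\<bar> \<le> C * h powr E"
    using tri mdec t1 t2 t3 t4 t5 unfolding C_def \<sigma>_def by (simp add: algebra_simps)
  then show ?thesis by (simp add: \<sigma>_def h_def)
qed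


theorem theorem1p3:
  fixes n :: nat
  defines "n \<equiv> CARD('n::finite)"
  shows "\<forall>\<epsilon>>0. \<exists>C H0. \<forall>H::int. H \<ge> H0 \<longrightarrow>
     \<bar>Phi TYPE('n) H - 2 ^ (n^2) * sigma_const n * real_of_int H ^ (n^2)\<bar>
       \<le> C * real_of_int H powr (real (n^2) - vartheta n + \<epsilon>)"
proof (intro allI impI)
  fix \<epsilon> :: real assume \<epsilon>: "\<epsilon> > 0"
  have n1: "n \<ge> 1" by (simp add: n_def Suc_le_eq)
  define \<delta> where "\<delta> = min (1/2) (\<epsilon> / real n)"
  have \<delta>0: "\<delta> > 0" using \<epsilon> n1 by (simp add: \<delta>_def)
  have \<delta>1: "\<delta> < 1" by (simp add: \<delta>_def)
  have n\<delta>: "real n * \<delta> \<le> \<epsilon>"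
  proof -
    have "\<delta> \<le> \<epsilon> / real n" by (simp add: \<delta>_def)
    then have "real n * \<delta> \<le> real n * (\<epsilon> / real n)" using n1 by (intro mult_left_mono) auto
    also have "\<dots> = \<epsilon>" using n1 by simp
    finally show ?thesis .
  qed
  define m where "m = n * n"
  have mn: "m = n^2" by (simp add: m_def power2_eq_square)
  define E where "E = real m - 1 + real n * \<delta>"
  define C where "C = 2 * real m * 5 ^ (m - 1) * KT n \<delta> + real n * 3 ^ (m - 1) * KT 1 \<delta>
             + 3 ^ m * 2 ^ Bd \<delta> * fact n powr \<delta> + 3 ^ m * KT n \<delta> + \<bar>sigma_const n\<bar> * 2 * real m * 3 ^ (m - 1)"
  have vt: "vartheta n \<le> 1" by (simp add: vartheta_def)
  have EE: "E \<le> real (n^2) - vartheta n + \<epsilon>" using n\<delta> vt by (simp add: E_def mn)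
  show "\<exists>C H0. \<forall>H::int. H \<ge> H0 \<longrightarrow>
     \<bar>Phi TYPE('n) H - 2 ^ (n^2) * sigma_const n * real_of_int H ^ (n^2)\<bar>
       \<le> C * real_of_int H powr (real (n^2) - vartheta n + \<epsilon>)"
  proof (intro exI allI impI)
    fix H :: int assume H: "H \<ge> 1"
    have b: "\<bar>Phi TYPE('n) H - 2 ^ m * sigma_const n * real_of_int H ^ m\<bar> \<le> C * real_of_int H powr E"
      using final_bound[OF H \<delta>0 \<delta>1, where 'n='n] unfolding C_def E_def m_def n_def by simp
    have hp: "real_of_int H powr E > 0" using H by simp
    have C0: "C \<ge> 0"
    proof (rule ccontr)
      assume "\<not> C \<ge> 0"
      then have "C * real_of_int H powr E < 0" using hp by (simp add: mult_neg_pos)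
      then show False using b by linarith
    qed
    have "real_of_int H powr E \<le> real_of_int H powr (real (n^2) - vartheta n + \<epsilon>)"
      using H EE by (intro powr_mono) auto
    then have "C * real_of_int H powr E \<le> C * real_of_int H powr (real (n^2) - vartheta n + \<epsilon>)"
      using C0 by (rule mult_left_mono)
    then show "\<bar>Phi TYPE('n) H - 2 ^ (n^2) * sigma_const n * real_of_int H ^ (n^2)\<bar>
       \<le> C * real_of_int H powr (real (n^2) - vartheta n + \<epsilon>)"
      using b by (simp add: mn)
  qed
qed

end
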